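(* Let $\mathcal{G}=(V,\sigma,E)$ be a connected dual equivalence graph of type $(n,N)$ with $n<N$, and let $\phi$ be an isomorphism from the $(n,n)$-restriction of $\mathcal{G}$ to $\mathcal{G}_\lambda$ for some partition $\lambda$ of $n$. Then there exist a partition $\rho\supseteq\lambda$ with $|\rho|=N$ and a filling $A$ of $\rho/\lambda$ with entries $n+1,\dots,N$ (with $\mathrm{ASYT}(\lambda,A)\ne\emptyset$) such that the same map $\phi$ is an isomorphism from $\mathcal{G}$ to $\mathcal{G}_{\lambda,A}$. Moreover, the position of the cell of $A$ containing $n+1$ is uniquely determined.
   Context: Tableaux conventions. Partitions, French diagrams (cells $(i,j)$ with $1\le i\le\lambda_j$, rows from the bottom), skew diagrams $\rho/\lambda$ = set difference. $\mathrm{SYT}(\rho)$: bijections from cells to $[N]$ increasing along rows and up columns. Content of $(i,j)$ is $i-j$; content reading word reads entries by increasing content, each diagonal southwest to northeast; descent signature $\sigma(T)\in\{\pm1\}^{N-1}$, $\sigma(T)_i=+1$ iff $i$ is left of $i+1$ in the reading word. $d_i$ on words: identity if $i$ lies positionally between $i-1,i+1$, otherwise swap $i$ with the farther of $i\pm1$; on tableaux, swap the corresponding entries. A signed, colored graph of type $(n,N)$ is $(V,\sigma,E)$: finite $V$, $\sigma:V\to\{\pm1\}^{N-1}$, for $1<i<n$ sets $E_i$ of $2$-element subsets of $V$. For $m\le n$, $M\le N$, its $(m,M)$-restriction has vertex set $V$, signatures truncated to the first $M-1$ coordinates, and edges $E_2,\dots,E_{m-1}$. It is a dual equivalence graph of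 type $(n,N)$ if $n\le N$ and (indices only where defined): (ax1) for $w\in V$, $1<i<n$: $\sigma(w)_{i-1}=-\sigma(w)_i$ iff some $x$ has $\{w,x\}\in E_i$, and such $x$ is unique; (ax2) if $\{w,x\}\in E_i$: $\sigma(w)_j=-\sigma(x)_j$ for $j=i-1,i$ and $\sigma(w)_h=\sigma(x)_h$ for $h<i-2$, $h>i+1$; (ax3) if $\{w,x\}\in E_i$ and $\sigma(w)_{i-2}=-\sigma(x)_{i-2}$ then $\sigma(w)_{i-2}=-\sigma(w)_{i-1}$; if $\sigma(w)_{i+1}=-\sigma(x)_{i+1}$ then $\sigma(w)_{i+1}=-\sigma(w)_i$; (ax4) each component of $(V,E_{i-1}\cup E_i)$ is a single vertex, a path $x,y,z$ with only edges $\{x,y\}\in E_{i-1}$, $\{y,z\}\in E_i$, or two vertices joined by both an $E_{i-1}$- and an $E_i$-edge; each component of $(V,E_{i-2}\cup E_{i-1}\cup E_i)$ is: (a) a single vertex; (b) a path $p,q,r,s$ with only edges $\{p,q\}\in E_{i-2}$, $\{q,r\}\in E_{i-1}$, $\{r,s\}\in E_i$; (c) vertices $a,b,c,d,e$ with only edges $\{a,b\}\in E_{i-2}\cap E_{i-1}$, $\{b,c\}\in E_i$, $\{c,d\}\in E_{i-2}$, $\{d,e\}\in E_{i-1}\cap E_i$; (d) vertices $u,v,w,x,y,z$ with only edges $\{u,v\}\in E_{i-1}$, $\{v,w\}\in E_{i-2}$, $\{v,x\}\in E_i$, $\{w,y\}\in E_i$, $\{x,y\}\in E_{i-2}$, $\{y,z\}\in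 E_{i-1}$; (ax5) if $\{w,x\}\in E_i$, $\{x,y\}\in E_j$, $|i-j|\ge3$, then some $v$ has $\{w,v\}\in E_j$, $\{v,y\}\in E_i$; (ax6) for each $1<i<n$, any two vertices of a component of $(V,E_2\cup\dots\cup E_i)$ are joined by a path in it with at most one $E_i$-edge. $\mathcal{G}_\lambda$: type $(n,n)$, vertices $\mathrm{SYT}(\lambda)$, descent signature, $E_i=\{\{T,d_i(T)\}:d_i(T)\neq T\}$. Augmented: for $\lambda\subseteq\rho$, $|\lambda|=n$, $|\rho|=N$, $A$ a filling of $\rho/\lambda$ by $n+1,\dots,N$, $\mathrm{ASYT}(\lambda,A)$ is the set of $T\in\mathrm{SYT}(\rho)$ restricting to $A$ on $\rho/\lambda$, and $\mathcal{G}_{\lambda,A}$ is the type $(n,N)$ graph on $\mathrm{ASYT}(\lambda,A)$ with descent signatures in $\{\pm1\}^{N-1}$ and $E_i=\{\{T,d_i(T)\}:d_i(T)\ne T\}$, $1<i<n$. Restricting a tableau in $\mathrm{ASYT}(\lambda,A)$ to $\lambda$ identifies $\mathrm{ASYT}(\lambda,A)$ with $\mathrm{SYT}(\lambda)$, through which $\phi$ is regarded as a map to $\mathrm{ASYT}(\lambda,A)$. An isomorphism is a vertex bijection preserving signatures and mapping $i$-edges to $i$-edges. *)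

theory Defs
  imports Main
begin

text \<open>A partition is a weakly decreasing list of positive parts; lam!(j-1) is the
length of row j (rows counted from the bottom). Cells are pairs (i,j) with
1 <= j <= length lam and 1 <= i <= lam!(j-1): i is the column, j is the row.\<close>

definition is_partition :: "nat list \<Rightarrow> bool" where
  "is_partition lam \<longleftrightarrow> sorted_wrt (\<ge>) lam \<and> (\<forall>x\<in>set lam. 0 < x)"

definition cells :: "nat list \<Rightarrow> (nat \<times> nat) set" where
  "cells lam = {(i,j). 1 \<le> j \<and> j \<le> length lam \<and> 1 \<le> i \<and> i \<le> lam ! (j - 1)}"

type_synonym tableau = "nat \<times> nat \<Rightarrow> nat"

text \<open>Standard Young tableaux of shape rho: bijections cells -> {1..|rho|}, increasing
along rows and up columns; the value 0 is used outside the diagram so that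
tableaux are determined by their entries.\<close>

definition SYT :: "nat list \<Rightarrow> tableau set" where
  "SYT rho = {T. (\<forall>c. c \<notin> cells rho \<longrightarrow> T c = 0)
      \<and> bij_betw T (cells rho) {1..sum_list rho}
      \<and> (\<forall>i j. (i,j) \<in> cells rho \<and> (Suc i, j) \<in> cells rho \<longrightarrow> T (i,j) < T (Suc i, j))
      \<and> (\<forall>i j. (i,j) \<in> cells rho \<and> (i, Suc j) \<in> cells rho \<longrightarrow> T (i,j) < T (i, Suc j))}"

definition cell_of :: "tableau \<Rightarrow> nat \<Rightarrow> nat \<times> nat" where
  "cell_of T k = (THE c. T c = k)"

text \<open>Order of cells in the content reading word: increasing content i - j,
and along a diagonal from southwest to northeast (increasing row j).\<close>

definition rd_less :: "nat \<times> nat \<Rightarrow> nat \<times> nat \<Rightarrow> bool" where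
  "rd_less c c' \<longleftrightarrow>
     (int (fst c) - int (snd c) < int (fst c') - int (snd c'))
     \<or> (int (fst c) - int (snd c) = int (fst c') - int (snd c') \<and> snd c < snd c')"

definition rlt :: "tableau \<Rightarrow> nat \<Rightarrow> nat \<Rightarrow> bool" where
  "rlt T a b \<longleftrightarrow> rd_less (cell_of T a) (cell_of T b)"

definition desc_sig :: "tableau \<Rightarrow> nat \<Rightarrow> int" where
  "desc_sig T k = (if rlt T k (Suc k) then 1 else -1)"

definition swap_entries :: "tableau \<Rightarrow> nat \<Rightarrow> nat \<Rightarrow> tableau" where
  "swap_entries T a b = (\<lambda>c. if T c = a then b else if T c = b then a else T c)"

text \<open>d_i: identity if i lies between i-1 and i+1 in the reading word; otherwise
swap i with the one of i-1, i+1 that is farther from i.\<close>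
definition dual_d :: "nat \<Rightarrow> tableau \<Rightarrow> tableau" where
  "dual_d i T =
    (if (rlt T (i-1) i \<and> rlt T i (Suc i)) \<or> (rlt T (Suc i) i \<and> rlt T i (i-1)) then T
     else if rlt T i (i-1) \<and> rlt T i (Suc i) then
       (if rlt T (i-1) (Suc i) then swap_entries T i (Suc i) else swap_entries T i (i-1))
     else
       (if rlt T (i-1) (Suc i) then swap_entries T i (i-1) else swap_entries T i (Suc i)))"

definition tab_edges :: "nat \<Rightarrow> tableau set \<Rightarrow> nat \<Rightarrow> tableau set set" where
  "tab_edges n S i = (if 1 < i \<and> i < n then {{T, dual_d i T} | T. T \<in> S \<and> dual_d i T \<noteq> T} else {})"

definition is_filling :: "nat list \<Rightarrow> nat list \<Rightarrow> nat \<Rightarrow> nat \<Rightarrow> tableau \<Rightarrow> bool" where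
  "is_filling lam rho n N A \<longleftrightarrow> (\<forall>c. c \<notin> cells rho - cells lam \<longrightarrow> A c = 0)
      \<and> bij_betw A (cells rho - cells lam) {Suc n..N}"

definition ASYT :: "nat list \<Rightarrow> nat list \<Rightarrow> tableau \<Rightarrow> tableau set" where
  "ASYT lam rho A = {T \<in> SYT rho. \<forall>c \<in> cells rho - cells lam. T c = A c}"

definition augment :: "nat list \<Rightarrow> tableau \<Rightarrow> tableau \<Rightarrow> tableau" where
  "augment lam A P = (\<lambda>c. if c \<in> cells lam then P c else A c)"

text \<open>A graph is (V, sigma, E); sigma v k is meaningful for 1 <= k < N, E i for 1 < i < n.\<close>

definition signed_colored_graph ::
  "nat \<Rightarrow> nat \<Rightarrow> 'v set \<Rightarrow> ('v \<Rightarrow> nat \<Rightarrow> int) \<Rightarrow> (nat \<Rightarrow> 'v set set) \<Rightarrow> bool" where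
  "signed_colored_graph n N V \<sigma> E \<longleftrightarrow> finite V
     \<and> (\<forall>v\<in>V. \<forall>k. 1 \<le> k \<and> k < N \<longrightarrow> \<sigma> v k = 1 \<or> \<sigma> v k = -1)
     \<and> (\<forall>i. 1 < i \<and> i < n \<longrightarrow> (\<forall>e\<in>E i. \<exists>x\<in>V. \<exists>y\<in>V. x \<noteq> y \<and> e = {x,y}))"

definition restr_sig :: "nat \<Rightarrow> ('v \<Rightarrow> nat \<Rightarrow> int) \<Rightarrow> 'v \<Rightarrow> nat \<Rightarrow> int" where
  "restr_sig M \<sigma> = (\<lambda>v k. if 1 \<le> k \<and> k < M then \<sigma> v k else 0)"

definition restr_edges :: "nat \<Rightarrow> (nat \<Rightarrow> 'v set set) \<Rightarrow> nat \<Rightarrow> 'v set set" where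
  "restr_edges m E = (\<lambda>i. if 1 < i \<and> i < m then E i else {})"

definition edge_rel :: "'v set set \<Rightarrow> ('v \<times> 'v) set" where
  "edge_rel F = {(x,y). {x,y} \<in> F}"

definition component :: "'v set \<Rightarrow> 'v set set \<Rightarrow> 'v \<Rightarrow> 'v set" where
  "component V F v = {w \<in> V. (v,w) \<in> (edge_rel F)\<^sup>*}"

definition edges_in :: "'v set set \<Rightarrow> 'v set \<Rightarrow> 'v set set" where
  "edges_in F C = {e \<in> F. e \<subseteq> C}"

definition all_edges :: "nat \<Rightarrow> (nat \<Rightarrow> 'v set set) \<Rightarrow> 'v set set" where
  "all_edges n E = \<Union>{E j | j. 1 < j \<and> j < n}"

definition connected_graph :: "nat \<Rightarrow> 'v set \<Rightarrow> (nat \<Rightarrow> 'v set set) \<Rightarrow> bool" where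
  "connected_graph n V E \<longleftrightarrow> (\<forall>x\<in>V. \<forall>y\<in>V. (x,y) \<in> (edge_rel (all_edges n E))\<^sup>*)"

definition deg_ax1 where
  "deg_ax1 n N V \<sigma> E \<longleftrightarrow> (\<forall>w\<in>V. \<forall>i. 1 < i \<and> i < n \<longrightarrow>
     ((\<sigma> w (i-1) = - \<sigma> w i) \<longleftrightarrow> (\<exists>x. {w,x} \<in> E i))
     \<and> (\<forall>x y. {w,x} \<in> E i \<and> {w,y} \<in> E i \<longrightarrow> x = y))"

definition deg_ax2 where
  "deg_ax2 n N V \<sigma> E \<longleftrightarrow> (\<forall>i w x. 1 < i \<and> i < n \<and> {w,x} \<in> E i \<longrightarrow>
     \<sigma> w (i-1) = - \<sigma> x (i-1) \<and> \<sigma> w i = - \<sigma> x i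
     \<and> (\<forall>h. 1 \<le> h \<and> h < N \<and> (h + 2 < i \<or> h > Suc i) \<longrightarrow> \<sigma> w h = \<sigma> x h))"

definition deg_ax3 where
  "deg_ax3 n N V \<sigma> E \<longleftrightarrow> (\<forall>i w x. 1 < i \<and> i < n \<and> {w,x} \<in> E i \<longrightarrow>
     (2 < i \<and> \<sigma> w (i-2) = - \<sigma> x (i-2) \<longrightarrow> \<sigma> w (i-2) = - \<sigma> w (i-1))
     \<and> (Suc i < N \<and> \<sigma> w (Suc i) = - \<sigma> x (Suc i) \<longrightarrow> \<sigma> w (Suc i) = - \<sigma> w i))"

definition deg_ax4 where
  "deg_ax4 n N V \<sigma> E \<longleftrightarrow>
   (\<forall>i. 2 < i \<and> i < n \<longrightarrow> (\<forall>v\<in>V. let C = component V (E (i-1) \<union> E i) v in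
       C = {v}
     \<or> (\<exists>x y z. distinct [x,y,z] \<and> C = {x,y,z}
          \<and> edges_in (E (i-1)) C = {{x,y}} \<and> edges_in (E i) C = {{y,z}})
     \<or> (\<exists>x y. x \<noteq> y \<and> C = {x,y}
          \<and> edges_in (E (i-1)) C = {{x,y}} \<and> edges_in (E i) C = {{x,y}})))
   \<and>
   (\<forall>i. 3 < i \<and> i < n \<longrightarrow> (\<forall>v0\<in>V. let C = component V (E (i-2) \<union> E (i-1) \<union> E i) v0 in
       C = {v0}
     \<or> (\<exists>p q r s. distinct [p,q,r,s] \<and> C = {p,q,r,s}
          \<and> edges_in (E (i-2)) C = {{p,q}} \<and> edges_in (E (i-1)) C = {{q,r}}
          \<and> edges_in (E i) C = {{r,s}})
     \<or> (\<exists>a b c d e. distinct [a,b,c,d,e] \<and> C = {a,b,c,d,e}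
          \<and> edges_in (E (i-2)) C = {{a,b},{c,d}} \<and> edges_in (E (i-1)) C = {{a,b},{d,e}}
          \<and> edges_in (E i) C = {{b,c},{d,e}})
     \<or> (\<exists>u v w x y z. distinct [u,v,w,x,y,z] \<and> C = {u,v,w,x,y,z}
          \<and> edges_in (E (i-1)) C = {{u,v},{y,z}} \<and> edges_in (E (i-2)) C = {{v,w},{x,y}}
          \<and> edges_in (E i) C = {{v,x},{w,y}})))"

definition deg_ax5 where
  "deg_ax5 n N V \<sigma> E \<longleftrightarrow> (\<forall>i j w x y. 1 < i \<and> i < n \<and> 1 < j \<and> j < n
     \<and> {w,x} \<in> E i \<and> {x,y} \<in> E j \<and> (i + 3 \<le> j \<or> j + 3 \<le> i)
     \<longrightarrow> (\<exists>v. {w,v} \<in> E j \<and> {v,y} \<in> E i))"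

definition deg_ax6 where
  "deg_ax6 n N V \<sigma> E \<longleftrightarrow> (\<forall>i. 1 < i \<and> i < n \<longrightarrow>
     (\<forall>x\<in>V. \<forall>y \<in> component V (\<Union>{E j | j. 1 < j \<and> j \<le> i}) x.
        (x,y) \<in> (edge_rel (\<Union>{E j | j. 1 < j \<and> j < i}))\<^sup>* O (edge_rel (E i))\<^sup>=
                 O (edge_rel (\<Union>{E j | j. 1 < j \<and> j < i}))\<^sup>*))"

definition dual_equivalence_graph ::
  "nat \<Rightarrow> nat \<Rightarrow> 'v set \<Rightarrow> ('v \<Rightarrow> nat \<Rightarrow> int) \<Rightarrow> (nat \<Rightarrow> 'v set set) \<Rightarrow> bool" where
  "dual_equivalence_graph n N V \<sigma> E \<longleftrightarrow> n \<le> N \<and> signed_colored_graph n N V \<sigma> E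
     \<and> deg_ax1 n N V \<sigma> E \<and> deg_ax2 n N V \<sigma> E \<and> deg_ax3 n N V \<sigma> E
     \<and> deg_ax4 n N V \<sigma> E \<and> deg_ax5 n N V \<sigma> E \<and> deg_ax6 n N V \<sigma> E"

definition graph_iso ::
  "nat \<Rightarrow> nat \<Rightarrow> 'a set \<Rightarrow> ('a \<Rightarrow> nat \<Rightarrow> int) \<Rightarrow> (nat \<Rightarrow> 'a set set)
   \<Rightarrow> 'b set \<Rightarrow> ('b \<Rightarrow> nat \<Rightarrow> int) \<Rightarrow> (nat \<Rightarrow> 'b set set) \<Rightarrow> ('a \<Rightarrow> 'b) \<Rightarrow> bool" where
  "graph_iso n N V \<sigma> E V' \<sigma>' E' f \<longleftrightarrow> bij_betw f V V'
     \<and> (\<forall>v\<in>V. \<forall>k. 1 \<le> k \<and> k < N \<longrightarrow> \<sigma>' (f v) k = \<sigma> v k)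
     \<and> (\<forall>i. 1 < i \<and> i < n \<longrightarrow> image (image f) (E i) = E' i)"

end

theory Submission
  imports Defs
begin


definition content :: "nat \<times> nat \<Rightarrow> int" where
  "content c = int (fst c) - int (snd c)"

lemma rd_less_content: "rd_less c c' \<longleftrightarrow> content c < content c' \<or> (content c = content c' \<and> snd c < snd c')"
  unfolding rd_less_def content_def by auto

lemma rd_less_irrefl: "\<not> rd_less c c"
  unfolding rd_less_content by auto

lemma rd_less_asym: "rd_less c c' \<Longrightarrow> \<not> rd_less c' c"
  unfolding rd_less_content by auto

lemma rd_less_trans: "rd_less a b \<Longrightarrow> rd_less b c \<Longrightarrow> rd_less a c"
  unfolding rd_less_content by auto

lemma rd_less_total: "a \<noteq> b \<Longrightarrow> rd_less a b \<or> rd_less b a"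
  unfolding rd_less_def by (cases a; cases b) auto

lemma content_less_rd: "content c < content c' \<Longrightarrow> rd_less c c'"
  unfolding rd_less_content by auto

definition ferrers :: "(nat \<times> nat) set \<Rightarrow> bool" where
  "ferrers D \<longleftrightarrow> finite D \<and> (\<forall>x y. (x,y) \<in> D \<longrightarrow> 1 \<le> x \<and> 1 \<le> y)
     \<and> (\<forall>x y x' y'. (x,y) \<in> D \<and> 1 \<le> x' \<and> 1 \<le> y' \<and> x' \<le> x \<and> y' \<le> y \<longrightarrow> (x',y') \<in> D)"

definition syt :: "(nat \<times> nat) set \<Rightarrow> tableau set" where
  "syt D = {T. (\<forall>c. c \<notin> D \<longrightarrow> T c = 0)
      \<and> bij_betw T D {1..card D}
      \<and> (\<forall>i j. (i,j) \<in> D \<and> (Suc i, j) \<in> D \<longrightarrow> T (i,j) < T (Suc i, j))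
      \<and> (\<forall>i j. (i,j) \<in> D \<and> (i, Suc j) \<in> D \<longrightarrow> T (i,j) < T (i, Suc j))}"

definition removable :: "(nat \<times> nat) set \<Rightarrow> nat \<times> nat \<Rightarrow> bool" where
  "removable D r \<longleftrightarrow> r \<in> D \<and> (Suc (fst r), snd r) \<notin> D \<and> (fst r, Suc (snd r)) \<notin> D"

definition addable :: "(nat \<times> nat) set \<Rightarrow> nat \<times> nat \<Rightarrow> bool" where
  "addable D c \<longleftrightarrow> c \<notin> D \<and> 1 \<le> fst c \<and> 1 \<le> snd c
     \<and> (2 \<le> fst c \<longrightarrow> (fst c - 1, snd c) \<in> D) \<and> (2 \<le> snd c \<longrightarrow> (fst c, snd c - 1) \<in> D)"

lemma cells_snoc: "cells (xs @ [x]) = cells xs \<union> {(i, Suc (length xs)) | i. 1 \<le> i \<and> i \<le> x}"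
  unfolding cells_def
  by (auto simp: nth_append le_Suc_eq)

lemma cells_finite_card: "finite (cells lam) \<and> card (cells lam) = sum_list lam"
proof (induction lam rule: rev_induct)
  case Nil
  have "cells [] = {}" by (auto simp: cells_def)
  then show ?case by simp
next
  case (snoc x xs)
  have e: "{(i, Suc (length xs)) | i. 1 \<le> i \<and> i \<le> x} = (\<lambda>i. (i, Suc (length xs))) ` {1..x}"
    by auto
  have d: "cells xs \<inter> {(i, Suc (length xs)) | i. 1 \<le> i \<and> i \<le> x} = {}"
    by (auto simp: cells_def)
  have "card ((\<lambda>i. (i, Suc (length xs))) ` {1..x}) = x"
    by (subst card_image) (auto simp: inj_on_def)
  then show ?case using snoc d unfolding cells_snoc e
    by (simp add: card_Un_disjoint)
qed

lemma SYT_syt: "SYT lam = syt (cells lam)"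
  unfolding SYT_def syt_def using cells_finite_card[of lam] by simp

lemma partition_ferrers:
  assumes "is_partition lam" shows "ferrers (cells lam)"
proof -
  have s: "sorted_wrt (\<ge>) lam" using assms by (simp add: is_partition_def)
  have "lam ! (j' - 1) \<ge> lam ! (j - 1)" if "1 \<le> j'" "j' \<le> j" "j \<le> length lam" for j j'
  proof (cases "j' = j")
    case False
    then show ?thesis using s that by (auto simp: sorted_wrt_iff_nth_less)
  qed simp
  then show ?thesis
    unfolding ferrers_def using cells_finite_card[of lam]
    by (auto simp: cells_def) (meson le_trans)
qed


lemma ferrersD:
  assumes "ferrers D" "(x,y) \<in> D" "1 \<le> x'" "1 \<le> y'" "x' \<le> x" "y' \<le> y"
  shows "(x',y') \<in> D"
  using assms unfolding ferrers_def by blast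

lemma ferrers_pos: "ferrers D \<Longrightarrow> (x,y) \<in> D \<Longrightarrow> 1 \<le> x \<and> 1 \<le> y"
  unfolding ferrers_def by blast

lemma ferrers_finite: "ferrers D \<Longrightarrow> finite D"
  unfolding ferrers_def by blast

lemma ferrers_remove:
  assumes "ferrers D" "removable D r" shows "ferrers (D - {r})"
proof -
  obtain a b where r: "r = (a,b)" by fastforce
  have "(x',y') \<in> D - {r}" if "(x,y) \<in> D - {r}" "1 \<le> x'" "1 \<le> y'" "x' \<le> x" "y' \<le> y" for x y x' y'
  proof -
    have "(x',y') \<in> D" using ferrersD[OF assms(1)] that by blast
    moreover have "(x',y') \<noteq> r"
    proof
      assume e: "(x',y') = r"
      then have "x' = a" "y' = b" using r by auto
      have "x > a \<or> y > b" using that e r \<open>x' = a\<close> \<open>y' = b\<close> by auto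
      then show False
      proof
        assume "x > a"
        then have "(Suc a, b) \<in> D" using ferrersD[OF assms(1), of x y "Suc a" b] that \<open>x' = a\<close> \<open>y' = b\<close> by auto
        then show False using assms(2) r by (simp add: removable_def)
      next
        assume "y > b"
        then have "(a, Suc b) \<in> D" using ferrersD[OF assms(1), of x y a "Suc b"] that \<open>x' = a\<close> \<open>y' = b\<close> by auto
        then show False using assms(2) r by (simp add: removable_def)
      qed
    qed
    ultimately show ?thesis by blast
  qed
  then show ?thesis using assms(1) unfolding ferrers_def by blast
qed

lemma ferrers_insert:
  assumes "ferrers D" "addable D c" shows "ferrers (insert c D)"
proof -
  obtain a b where c: "c = (a,b)" by fastforce
  have "(x',y') \<in> insert c D" if h: "(x,y) \<in> insert c D" "1 \<le> x'" "1 \<le> y'" "x' \<le> x" "y' \<le> y" for x y x' y'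
  proof (cases "(x,y) = c")
    case True
    then have xy: "x = a" "y = b" using c by auto
    show ?thesis
    proof (cases "x' < a")
      case True
      then have "2 \<le> a" using h(2) by simp
      then have m: "(a - 1, b) \<in> D" using assms(2) c by (simp add: addable_def)
      have "x' \<le> a - 1" "y' \<le> b" using True h(5) xy by auto
      then have "(x',y') \<in> D" using ferrersD[OF assms(1) m h(2) h(3)] by simp
      then show ?thesis by simp
    next
      case False
      show ?thesis
      proof (cases "y' < b")
        case True
        then have "2 \<le> b" using h(3) by simp
        then have m: "(a, b - 1) \<in> D" using assms(2) c by (simp add: addable_def)
        have "x' \<le> a" "y' \<le> b - 1" using True h(4) xy by auto
        then have "(x',y') \<in> D" using ferrersD[OF assms(1) m h(2) h(3)] by simp
        then show ?thesis by simp
      next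
        case False
        then have "x' = a" "y' = b" using \<open>\<not> x' < a\<close> h(4,5) xy by auto
        then show ?thesis using c by simp
      qed
    qed
  next
    case False
    then have "(x,y) \<in> D" using h(1) by simp
    then have "(x',y') \<in> D" using ferrersD[OF assms(1) _ h(2-5)] by simp
    then show ?thesis by simp
  qed
  moreover have "finite (insert c D)" using assms(1) by (simp add: ferrers_def)
  moreover have "\<forall>x y. (x,y) \<in> insert c D \<longrightarrow> 1 \<le> x \<and> 1 \<le> y"
  proof (intro allI impI)
    fix x y assume "(x,y) \<in> insert c D"
    then show "1 \<le> x \<and> 1 \<le> y"
      using ferrers_pos[OF assms(1), of x y] assms(2) c by (auto simp: addable_def)
  qed
  ultimately show ?thesis unfolding ferrers_def by blast
qed

lemma removable_addable:
  assumes "ferrers D" "removable D r" shows "addable (D - {r}) r"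
proof -
  obtain a b where r: "r = (a,b)" by fastforce
  have ab: "1 \<le> a" "1 \<le> b" using assms r ferrers_pos by (auto simp: removable_def)
  have rD: "(a,b) \<in> D" using assms(2) r by (simp add: removable_def)
  have "(a-1,b) \<in> D" if "2 \<le> a"
  proof -
    have "1 \<le> a - 1" using that by simp
    then show ?thesis using ferrersD[OF assms(1) rD, of "a-1" b] ab by simp
  qed
  moreover have "(a,b-1) \<in> D" if "2 \<le> b"
  proof -
    have "1 \<le> b - 1" using that by simp
    then show ?thesis using ferrersD[OF assms(1) rD, of a "b-1"] ab by simp
  qed
  ultimately show ?thesis using r ab rD by (auto simp: addable_def removable_def)
qed

lemma removable_mono:
  "removable D r \<Longrightarrow> r \<in> D' \<Longrightarrow> D' \<subseteq> D \<Longrightarrow> removable D' r"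
  unfolding removable_def by blast

lemma ex_removable:
  assumes "ferrers D" "D \<noteq> {}" shows "\<exists>r. removable D r"
proof -
  have fin: "finite D" using assms ferrers_finite by blast
  define f where "f = (\<lambda>c::nat\<times>nat. fst c + snd c)"
  have "Max (f ` D) \<in> f ` D" using fin assms(2) by simp
  then obtain r where r: "r \<in> D" "f r = Max (f ` D)" by force
  have "f c \<le> f r" if "c \<in> D" for c using that fin r by simp
  then have "(Suc (fst r), snd r) \<notin> D" "(fst r, Suc (snd r)) \<notin> D"
    by (fastforce simp: f_def)+
  then show ?thesis using r by (intro exI[of _ r]) (simp add: removable_def)
qed

lemma sytD:
  assumes "T \<in> syt D"
  shows "\<And>c. c \<notin> D \<Longrightarrow> T c = 0" "bij_betw T D {1..card D}"
    "\<And>i j. (i,j) \<in> D \<Longrightarrow> (Suc i, j) \<in> D \<Longrightarrow> T (i,j) < T (Suc i, j)"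
    "\<And>i j. (i,j) \<in> D \<Longrightarrow> (i, Suc j) \<in> D \<Longrightarrow> T (i,j) < T (i, Suc j)"
  using assms unfolding syt_def by blast+

lemma syt_range: "T \<in> syt D \<Longrightarrow> c \<in> D \<Longrightarrow> 1 \<le> T c \<and> T c \<le> card D"
  using sytD(2) by (fastforce simp: bij_betw_def)

lemma syt_inj: "T \<in> syt D \<Longrightarrow> c \<in> D \<Longrightarrow> c' \<in> D \<Longrightarrow> T c = T c' \<Longrightarrow> c = c'"
  using sytD(2) by (fastforce simp: bij_betw_def inj_on_def)

lemma syt_val_in: "T \<in> syt D \<Longrightarrow> T c \<noteq> 0 \<Longrightarrow> c \<in> D"
proof (rule ccontr)
  assume "T \<in> syt D" "T c \<noteq> 0" "c \<notin> D"
  then show False using sytD(1)[of T D c] by simp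
qed

lemma syt_surj: "T \<in> syt D \<Longrightarrow> 1 \<le> k \<Longrightarrow> k \<le> card D \<Longrightarrow> \<exists>c\<in>D. T c = k"
proof -
  assume a: "T \<in> syt D" "1 \<le> k" "k \<le> card D"
  then have "k \<in> T ` D" using sytD(2)[OF a(1)] by (auto simp: bij_betw_def)
  then show ?thesis by auto
qed

lemma cell_of_eq: "T \<in> syt D \<Longrightarrow> T c = k \<Longrightarrow> 1 \<le> k \<Longrightarrow> cell_of T k = c"
  unfolding cell_of_def
proof (rule the_equality)
  assume a: "T \<in> syt D" "T c = k" "1 \<le> k"
  show "T c = k" by (fact a(2))
  fix c' assume "T c' = k"
  then have "c' \<in> D" "c \<in> D" using a syt_val_in[OF a(1)] by auto
  then show "c' = c" using a syt_inj[OF a(1), of c' c] \<open>T c' = k\<close> by simp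
qed

lemma syt_mono:
  assumes T: "T \<in> syt D" and F: "ferrers D"
  shows "(x,y) \<in> D \<Longrightarrow> (x',y') \<in> D \<Longrightarrow> x \<le> x' \<Longrightarrow> y \<le> y' \<Longrightarrow> T (x,y) \<le> T (x',y')"
proof (induction "x' + y' - x - y" arbitrary: x' y')
  case 0
  then have "x' = x \<and> y' = y" by linarith
  then show ?case by simp
next
  case (Suc d)
  show ?case
  proof (cases "x < x'")
    case True
    have "1 \<le> x" "1 \<le> y'" using ferrers_pos[OF F Suc.prems(1)] ferrers_pos[OF F Suc.prems(2)] by auto
    then have "1 \<le> x' - 1" using True by simp
    then have p: "(x'-1, y') \<in> D" using ferrersD[OF F Suc.prems(2), of "x'-1" y'] \<open>1 \<le> y'\<close> by simp
    have "T (x,y) \<le> T (x'-1,y')" using Suc.hyps(1)[of "x'-1" y'] Suc.prems Suc.hyps(2) True p by auto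
    also have "\<dots> < T (x',y')" using sytD(3)[OF T p] True Suc.prems by (simp add: Suc_diff_1)
    finally show ?thesis by simp
  next
    case False
    then have "y < y'" using Suc by auto
    have "1 \<le> y" "1 \<le> x'" using ferrers_pos[OF F Suc.prems(1)] ferrers_pos[OF F Suc.prems(2)] by auto
    then have "1 \<le> y' - 1" using \<open>y<y'\<close> by simp
    then have p: "(x', y'-1) \<in> D" using ferrersD[OF F Suc.prems(2), of x' "y'-1"] \<open>1 \<le> x'\<close> by simp
    have "T (x,y) \<le> T (x',y'-1)" using Suc.hyps(1)[of x' "y'-1"] Suc.prems Suc.hyps(2) \<open>y<y'\<close> p by auto
    also have "\<dots> < T (x',y')" using sytD(4)[OF T p] \<open>y<y'\<close> Suc.prems by (simp add: Suc_diff_1)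
    finally show ?thesis by simp
  qed
qed

lemma syt_max_removable:
  assumes T: "T \<in> syt D" and F: "ferrers D" and r: "r \<in> D" "T r = card D"
  shows "removable D r"
proof -
  obtain a b where rr: "r = (a,b)" by fastforce
  have "(Suc a, b) \<notin> D"
    using sytD(3)[OF T, of a b] syt_range[OF T, of "(Suc a, b)"] r rr by fastforce
  moreover have "(a, Suc b) \<notin> D"
    using sytD(4)[OF T, of a b] syt_range[OF T, of "(a, Suc b)"] r rr by fastforce
  ultimately show ?thesis using r rr by (simp add: removable_def)
qed

lemma syt_extend:
  assumes T: "T \<in> syt D" and F: "ferrers D" and c: "addable D c"
  shows "T(c := Suc (card D)) \<in> syt (insert c D)"
proof -
  have fin: "finite D" using F ferrers_finite by blast
  have cD: "c \<notin> D" using c by (simp add: addable_def)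
  have card: "card (insert c D) = Suc (card D)" using fin cD by simp
  have F2: "ferrers (insert c D)" using ferrers_insert[OF F c] .
  let ?T = "T(c := Suc (card D))"
  have bij: "bij_betw ?T (insert c D) {1..Suc (card D)}"
  proof -
    have b1: "bij_betw ?T D {1..card D}"
      using sytD(2)[OF T] by (rule bij_betw_cong[THEN iffD1, rotated]) (use cD in auto)
    have "bij_betw ?T (D \<union> {c}) ({1..card D} \<union> {?T c})"
      using b1 cD by (intro notIn_Un_bij_betw) auto
    then have "bij_betw ?T (insert c D) (insert (?T c) {1..card D})" by simp
    moreover have "insert (?T c) {1..card D} = {1..Suc (card D)}" by auto
    ultimately show ?thesis by simp
  qed
  have notleft: "(Suc i, j) \<noteq> c" if "(i,j) \<in> D" "(Suc i,j) \<in> insert c D" "c = (i,j)" for i j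
    using that cD by auto
  have r1: "?T (i,j) < ?T (Suc i, j)" if "(i,j) \<in> insert c D" "(Suc i,j) \<in> insert c D" for i j
  proof -
    have ij: "(i,j) \<noteq> c"
    proof
      assume "(i,j) = c"
      then have "(Suc i, j) \<in> D" using that(2) by auto
      then have "(i,j) \<in> D" using ferrersD[OF F, of "Suc i" j i j] ferrers_pos[OF F2 that(1)] by auto
      then show False using \<open>(i,j) = c\<close> cD by auto
    qed
    then have ijD: "(i,j) \<in> D" using that by auto
    show ?thesis
    proof (cases "(Suc i, j) = c")
      case True
      then show ?thesis using ij syt_range[OF T ijD] by auto
    next
      case False
      then show ?thesis using ij sytD(3)[OF T ijD] that by auto
    qed
  qed
  have r2: "?T (i,j) < ?T (i, Suc j)" if "(i,j) \<in> insert c D" "(i,Suc j) \<in> insert c D" for i j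
  proof -
    have ij: "(i,j) \<noteq> c"
    proof
      assume "(i,j) = c"
      then have "(i, Suc j) \<in> D" using that(2) by auto
      then have "(i,j) \<in> D" using ferrersD[OF F, of i "Suc j" i j] ferrers_pos[OF F2 that(1)] by auto
      then show False using \<open>(i,j) = c\<close> cD by auto
    qed
    then have ijD: "(i,j) \<in> D" using that by auto
    show ?thesis
    proof (cases "(i, Suc j) = c")
      case True
      then show ?thesis using ij syt_range[OF T ijD] by auto
    next
      case False
      then show ?thesis using ij sytD(4)[OF T ijD] that by auto
    qed
  qed
  have z: "\<forall>c'. c' \<notin> insert c D \<longrightarrow> ?T c' = 0" using sytD(1)[OF T] by auto
  show ?thesis unfolding syt_def using z bij r1 r2 card by auto
qed

lemma syt_nonempty:
  assumes "ferrers D" shows "syt D \<noteq> {}"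
  using assms
proof (induction "card D" arbitrary: D)
  case 0
  then have "D = {}" using ferrers_finite by auto
  then have "(\<lambda>c. 0) \<in> syt D" unfolding syt_def by (simp add: bij_betw_def)
  then show ?case by blast
next
  case (Suc k)
  then have "D \<noteq> {}" by auto
  then obtain r where r: "removable D r" using ex_removable Suc.prems by blast
  have F': "ferrers (D - {r})" using ferrers_remove[OF Suc.prems r] .
  have rD: "r \<in> D" using r by (simp add: removable_def)
  have "card (D - {r}) = k" using Suc.hyps(2) rD by simp
  then obtain T where T: "T \<in> syt (D - {r})" using Suc.hyps(1)[OF _ F'] by auto
  have "T(r := Suc (card (D - {r}))) \<in> syt (insert r (D - {r}))"
    using syt_extend[OF T F' removable_addable[OF Suc.prems r]] .
  then show ?case using rD insert_Diff by force
qed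


lemma prefix_card:
  assumes T: "T \<in> syt D" and k: "k \<le> card D"
  shows "card {c \<in> D. T c \<le> k} = k"
proof -
  have "T ` {c \<in> D. T c \<le> k} = {1..k}"
  proof
    show "T ` {c \<in> D. T c \<le> k} \<subseteq> {1..k}" using syt_range[OF T] by auto
    show "{1..k} \<subseteq> T ` {c \<in> D. T c \<le> k}"
    proof
      fix v assume "v \<in> {1..k}"
      then obtain c where "c \<in> D" "T c = v" using syt_surj[OF T, of v] k by auto
      then show "v \<in> T ` {c \<in> D. T c \<le> k}" using \<open>v \<in> {1..k}\<close> by auto
    qed
  qed
  moreover have "inj_on T {c \<in> D. T c \<le> k}"
    using sytD(2)[OF T] by (auto simp: bij_betw_def inj_on_def)
  ultimately show ?thesis using card_image by fastforce
qed

lemma prefix_ferrers: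
  assumes T: "T \<in> syt D" and F: "ferrers D"
  shows "ferrers {c \<in> D. T c \<le> k}"
proof -
  have "(x',y') \<in> {c \<in> D. T c \<le> k}"
    if h: "(x,y) \<in> {c \<in> D. T c \<le> k}" "1 \<le> x'" "1 \<le> y'" "x' \<le> x" "y' \<le> y" for x y x' y'
  proof -
    have "(x,y) \<in> D" using h by simp
    then have d: "(x',y') \<in> D" using ferrersD[OF F _ h(2-5)] by simp
    have "T (x',y') \<le> T (x,y)" using syt_mono[OF T F d \<open>(x,y) \<in> D\<close> h(4,5)] .
    then show ?thesis using d h(1) by simp
  qed
  moreover have "finite {c \<in> D. T c \<le> k}" using ferrers_finite[OF F] by simp
  moreover have "\<forall>x y. (x,y) \<in> {c \<in> D. T c \<le> k} \<longrightarrow> 1 \<le> x \<and> 1 \<le> y"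
    using ferrers_pos[OF F] by blast
  ultimately show ?thesis unfolding ferrers_def by blast
qed

definition glue :: "(nat \<times> nat) set \<Rightarrow> tableau \<Rightarrow> tableau \<Rightarrow> tableau" where
  "glue Dk Q T = (\<lambda>c. if c \<in> Dk then Q c else T c)"

lemma glue_syt:
  assumes T: "T \<in> syt D" and F: "ferrers D" and k: "k \<le> card D"
    and Dk: "Dk = {c \<in> D. T c \<le> k}" and Q: "Q \<in> syt Dk"
  shows "glue Dk Q T \<in> syt D"
proof -
  let ?S = "glue Dk Q T"
  have cardk: "card Dk = k" using prefix_card[OF T k] Dk by simp
  have sub: "Dk \<subseteq> D" using Dk by auto
  have b0: "bij_betw Q Dk {1..k}" using sytD(2)[OF Q] cardk by simp
  have b1: "bij_betw ?S Dk {1..k}"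
    using bij_betw_cong[of Dk ?S Q "{1..k}"] b0 by (simp add: glue_def)
  have b2: "bij_betw ?S (D - Dk) {Suc k..card D}"
  proof -
    have "bij_betw T (D - Dk) {Suc k..card D}"
    proof (rule bij_betw_subset[OF sytD(2)[OF T]])
      show "D - Dk \<subseteq> D" by auto
      show "T ` (D - Dk) = {Suc k..card D}"
      proof
        show "T ` (D - Dk) \<subseteq> {Suc k..card D}" using syt_range[OF T] Dk by auto
        show "{Suc k..card D} \<subseteq> T ` (D - Dk)"
        proof
          fix v assume v: "v \<in> {Suc k..card D}"
          then obtain c where "c \<in> D" "T c = v" using syt_surj[OF T, of v] by auto
          then show "v \<in> T ` (D - Dk)" using v Dk by auto
        qed
      qed
    qed
    then show ?thesis using bij_betw_cong[of "D - Dk" ?S T "{Suc k..card D}"] by (simp add: glue_def)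
  qed
  have bij: "bij_betw ?S D {1..card D}"
  proof -
    have "bij_betw ?S (Dk \<union> (D - Dk)) ({1..k} \<union> {Suc k..card D})"
      by (rule bij_betw_combine[OF b1 b2]) auto
    moreover have "Dk \<union> (D - Dk) = D" using sub by auto
    moreover have "{1..k} \<union> {Suc k..card D} = {1..card D}" using k by auto
    ultimately show ?thesis by simp
  qed
  have z: "\<forall>c. c \<notin> D \<longrightarrow> ?S c = 0" using sytD(1)[OF T] sub by (auto simp: glue_def)
  have gen: "?S a < ?S b" if "a \<in> D" "b \<in> D" "T a < T b" "a \<in> Dk \<Longrightarrow> b \<in> Dk \<Longrightarrow> Q a < Q b" for a b
  proof (cases "a \<in> Dk")
    case True
    show ?thesis
    proof (cases "b \<in> Dk")
      case True
      then show ?thesis using \<open>a \<in> Dk\<close> that by (simp add: glue_def)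
    next
      case False
      then have "T b > k" using that Dk by auto
      moreover have "Q a \<le> k" using syt_range[OF Q True] cardk by simp
      ultimately show ?thesis using True False by (simp add: glue_def)
    qed
  next
    case False
    then have "b \<notin> Dk" using that Dk by auto
    then show ?thesis using False that by (simp add: glue_def)
  qed
  have r1: "?S (i,j) < ?S (Suc i, j)" if "(i,j) \<in> D" "(Suc i, j) \<in> D" for i j
    using gen[OF that sytD(3)[OF T that]] sytD(3)[OF Q] by blast
  have r2: "?S (i,j) < ?S (i, Suc j)" if "(i,j) \<in> D" "(i, Suc j) \<in> D" for i j
    using gen[OF that sytD(4)[OF T that]] sytD(4)[OF Q] by blast
  show ?thesis unfolding syt_def using z bij r1 r2 by blast
qed

lemma ex_corner_between:
  assumes F: "ferrers D" and p: "p \<in> D" "c1 < content p" "content p < c2"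
    and bar2: "\<And>u. u \<in> D \<Longrightarrow> content u = c2 \<Longrightarrow> (fst u, Suc (snd u)) \<in> D"
    and bar1: "\<And>u. u \<in> D \<Longrightarrow> content u = c1 \<Longrightarrow> (Suc (fst u), snd u) \<in> D"
  shows "\<exists>q. removable D q \<and> c1 < content q \<and> content q < c2"
proof -
  define S where "S = {q \<in> D. c1 < content q \<and> content q < c2}"
  define f where "f = (\<lambda>c::nat\<times>nat. fst c + snd c)"
  have fin: "finite S" using ferrers_finite[OF F] S_def by simp
  have "p \<in> S" using p S_def by simp
  then have ne: "S \<noteq> {}" by blast
  have "Max (f ` S) \<in> f ` S" using fin ne by simp
  then obtain q where q: "q \<in> S" "f q = Max (f ` S)" by force
  have mx: "f c \<le> f q" if "c \<in> S" for c using that fin q by simp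
  obtain x y where qxy: "q = (x,y)" by fastforce
  have qD: "q \<in> D" and qc: "c1 < content q" "content q < c2" using q S_def by auto
  have n1: "(Suc x, y) \<notin> D"
  proof
    assume a: "(Suc x, y) \<in> D"
    show False
    proof (cases "content (Suc x, y) < c2")
      case True
      then have "(Suc x, y) \<in> S" using a qc qxy S_def by (auto simp: content_def)
      then show False using mx[of "(Suc x, y)"] qxy by (simp add: f_def)
    next
      case False
      then have "content (Suc x, y) = c2" using qc qxy by (auto simp: content_def)
      then have "(Suc x, Suc y) \<in> D" using bar2[OF a] by simp
      then have "(Suc x, Suc y) \<in> S" using qc qxy S_def by (auto simp: content_def)
      then show False using mx[of "(Suc x, Suc y)"] qxy by (simp add: f_def)
    qed
  qed
  have n2: "(x, Suc y) \<notin> D"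
  proof
    assume a: "(x, Suc y) \<in> D"
    show False
    proof (cases "c1 < content (x, Suc y)")
      case True
      then have "(x, Suc y) \<in> S" using a qc qxy S_def by (auto simp: content_def)
      then show False using mx[of "(x, Suc y)"] qxy by (simp add: f_def)
    next
      case False
      then have "content (x, Suc y) = c1" using qc qxy by (auto simp: content_def)
      then have "(Suc x, Suc y) \<in> D" using bar1[OF a] by simp
      then have "(Suc x, Suc y) \<in> S" using qc qxy S_def by (auto simp: content_def)
      then show False using mx[of "(Suc x, Suc y)"] qxy by (simp add: f_def)
    qed
  qed
  show ?thesis using qD qc n1 n2 qxy by (intro exI[of _ q]) (simp add: removable_def)
qed

lemma removable_order:
  assumes F: "ferrers D" and r1: "removable D (x1,y1)" and r2: "removable D (x2,y2)"
    and c: "content (x1,y1) < content (x2,y2)"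
  shows "y2 < y1 \<and> x1 < x2"
proof -
  have d1: "(x1,y1) \<in> D" "(Suc x1, y1) \<notin> D" "(x1, Suc y1) \<notin> D" using r1 by (auto simp: removable_def)
  have d2: "(x2,y2) \<in> D" "(Suc x2, y2) \<notin> D" "(x2, Suc y2) \<notin> D" using r2 by (auto simp: removable_def)
  have p1: "1 \<le> x1" "1 \<le> y1" using ferrers_pos[OF F d1(1)] by auto
  have p2: "1 \<le> x2" "1 \<le> y2" using ferrers_pos[OF F d2(1)] by auto
  have "y2 < y1"
  proof (rule ccontr)
    assume "\<not> y2 < y1"
    then have "x1 < x2" using c by (auto simp: content_def)
    then have "(Suc x1, y1) \<in> D" using ferrersD[OF F d2(1), of "Suc x1" y1] p1 \<open>\<not> y2 < y1\<close> by auto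
    then show False using d1 by simp
  qed
  moreover have "x1 < x2"
  proof (rule ccontr)
    assume "\<not> x1 < x2"
    then have "(x2, Suc y2) \<in> D" using ferrersD[OF F d1(1), of x2 "Suc y2"] p2 \<open>y2 < y1\<close> by auto
    then show False using d2 by simp
  qed
  ultimately show ?thesis by simp
qed

lemma removable_content_inj:
  assumes F: "ferrers D" and r1: "removable D r1" and r2: "removable D r2" and ne: "r1 \<noteq> r2"
  shows "content r1 \<noteq> content r2"
proof
  assume e: "content r1 = content r2"
  obtain x1 y1 x2 y2 where rr: "r1 = (x1,y1)" "r2 = (x2,y2)" by fastforce
  have d1: "(x1,y1) \<in> D" "(Suc x1, y1) \<notin> D" using r1 rr by (auto simp: removable_def)
  have d2: "(x2,y2) \<in> D" "(Suc x2, y2) \<notin> D" using r2 rr by (auto simp: removable_def)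
  have p1: "1 \<le> y1" using ferrers_pos[OF F d1(1)] by auto
  have p2: "1 \<le> y2" using ferrers_pos[OF F d2(1)] by auto
  have "x1 \<noteq> x2" using e ne rr by (auto simp: content_def)
  then show False
  proof (cases "x1 < x2")
    case True
    then have "y1 < y2" using e rr by (auto simp: content_def)
    then have "(Suc x1, y1) \<in> D" using ferrersD[OF F d2(1), of "Suc x1" y1] True p1 by auto
    then show False using d1 by simp
  next
    case False
    then have "x2 < x1" using \<open>x1 \<noteq> x2\<close> by simp
    then have "y2 < y1" using e rr by (auto simp: content_def)
    then have "(Suc x2, y2) \<in> D" using ferrersD[OF F d1(1), of "Suc x2" y2] \<open>x2 < x1\<close> p2 by auto
    then show False using d2 by simp
  qed
qed

lemma corner_between_removables:
  assumes F: "ferrers D" and r1: "removable D r1" and r2: "removable D r2"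
    and c: "content r1 < content r2"
  shows "\<exists>q. removable (D - {r1, r2}) q \<and> content r1 < content q \<and> content q < content r2"
proof -
  obtain x1 y1 x2 y2 where rr: "r1 = (x1,y1)" "r2 = (x2,y2)" by fastforce
  have o: "y2 < y1" "x1 < x2" using removable_order[OF F, of x1 y1 x2 y2] r1 r2 c rr by auto
  have d1: "(x1,y1) \<in> D" "(Suc x1, y1) \<notin> D" "(x1, Suc y1) \<notin> D" using r1 rr by (auto simp: removable_def)
  have d2: "(x2,y2) \<in> D" "(Suc x2, y2) \<notin> D" "(x2, Suc y2) \<notin> D" using r2 rr by (auto simp: removable_def)
  have p1: "1 \<le> x1" "1 \<le> y1" using ferrers_pos[OF F d1(1)] by auto
  have p2: "1 \<le> x2" "1 \<le> y2" using ferrers_pos[OF F d2(1)] by auto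
  have ne: "r1 \<noteq> r2" using c by auto
  have F1: "ferrers (D - {r1})" using ferrers_remove[OF F r1] .
  have "r2 \<in> D" using r2 by (simp add: removable_def)
  then have "r2 \<in> D - {r1}" using ne by simp
  then have r2': "removable (D - {r1}) r2" using removable_mono[OF r2 _ Diff_subset] by simp
  have F2: "ferrers (D - {r1} - {r2})" using ferrers_remove[OF F1 r2'] .
  have eqD: "D - {r1, r2} = D - {r1} - {r2}" by auto
  have F3: "ferrers (D - {r1, r2})" using F2 eqD by simp
  have c1: "content r1 = int x1 - int y1" and c2: "content r2 = int x2 - int y2"
    using rr by (simp_all add: content_def)
  have gap: "content r2 \<ge> content r1 + 2" unfolding c1 c2 using o by linarith
  have "(x1,y2) \<in> D" using ferrersD[OF F d2(1) p1(1) p2(2)] o by simp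
  moreover have "(x1,y2) \<noteq> r1" "(x1,y2) \<noteq> r2" using o rr by auto
  ultimately have pD: "(x1,y2) \<in> D - {r1, r2}" by simp
  show ?thesis
  proof (rule ex_corner_between[OF F3 pD])
    show "content r1 < content (x1, y2)" "content (x1, y2) < content r2"
      using o unfolding c1 c2 by (simp_all add: content_def)
  next
    fix u assume u: "u \<in> D - {r1, r2}" "content u = content r2"
    obtain a b where ab: "u = (a,b)" by fastforce
    have uD: "(a,b) \<in> D" using u ab by simp
    have cu: "int a - int b = int x2 - int y2" using u(2) ab c2 by (simp add: content_def)
    have pa: "1 \<le> a" using ferrers_pos[OF F uD] by simp
    have "b < y2"
    proof (rule ccontr)
      assume nb: "\<not> b < y2"
      have "u \<noteq> r2" using u by simp
      then have "b \<noteq> y2" using cu ab rr by auto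
      then have "b > y2" using nb by simp
      then have "a > x2" using cu by linarith
      then have "(Suc x2, y2) \<in> D" using ferrersD[OF F uD, of "Suc x2" y2] p2 \<open>b > y2\<close> by simp
      then show False using d2 by simp
    qed
    then have "a < x2" using cu by linarith
    have "(a, Suc b) \<in> D" using ferrersD[OF F d2(1), of a "Suc b"] pa \<open>b < y2\<close> \<open>a < x2\<close> by simp
    moreover have "content (a, Suc b) = content r2 - 1" using cu c2 by (simp add: content_def)
    then have "content (a, Suc b) \<noteq> content r1" "content (a, Suc b) \<noteq> content r2" using gap by linarith+
    then have "(a, Suc b) \<noteq> r1" "(a, Suc b) \<noteq> r2" by metis+
    ultimately show "(fst u, Suc (snd u)) \<in> D - {r1, r2}" using ab by simp
  next
    fix u assume u: "u \<in> D - {r1, r2}" "content u = content r1"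
    obtain a b where ab: "u = (a,b)" by fastforce
    have uD: "(a,b) \<in> D" using u ab by simp
    have cu: "int a - int b = int x1 - int y1" using u(2) ab c1 by (simp add: content_def)
    have pb: "1 \<le> b" using ferrers_pos[OF F uD] by simp
    have "b < y1"
    proof (rule ccontr)
      assume nb: "\<not> b < y1"
      have "u \<noteq> r1" using u by simp
      then have "b \<noteq> y1" using cu ab rr by auto
      then have "b > y1" using nb by simp
      then have "a > x1" using cu by linarith
      then have "(x1, Suc y1) \<in> D" using ferrersD[OF F uD, of x1 "Suc y1"] p1 \<open>b > y1\<close> by simp
      then show False using d1 by simp
    qed
    then have "a < x1" using cu by linarith
    have "(Suc a, b) \<in> D" using ferrersD[OF F d1(1), of "Suc a" b] pb \<open>b < y1\<close> \<open>a < x1\<close> by simp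
    moreover have "content (Suc a, b) = content r1 + 1" using cu c1 by (simp add: content_def)
    then have "content (Suc a, b) \<noteq> content r1" "content (Suc a, b) \<noteq> content r2" using gap by linarith+
    then have "(Suc a, b) \<noteq> r1" "(Suc a, b) \<noteq> r2" by metis+
    ultimately show "(Suc (fst u), snd u) \<in> D - {r1, r2}" using ab by simp
  qed
qed


lemma corner_between_any:
  assumes F: "ferrers D" and r: "removable D r" and r': "removable D r'" and ne: "r \<noteq> r'"
  shows "\<exists>q. removable (D - {r, r'}) q \<and>
     ((content r < content q \<and> content q < content r') \<or> (content r' < content q \<and> content q < content r))"
proof (cases "content r < content r'")
  case True
  obtain q where "removable (D - {r, r'}) q" "content r < content q" "content q < content r'"
    using corner_between_removables[OF F r r' True] by blast
  then show ?thesis by blast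
next
  case False
  then have "content r' < content r" using removable_content_inj[OF F r r' ne] by simp
  then obtain q where q: "removable (D - {r', r}) q" "content r' < content q" "content q < content r"
    using corner_between_removables[OF F r' r] by blast
  have "D - {r', r} = D - {r, r'}" by auto
  then have "removable (D - {r, r'}) q" using q(1) by simp
  then show ?thesis using q(2,3) by blast
qed

lemma dual_d_swap:
  assumes S: "S \<in> syt L" and k: "2 \<le> k"
    and v: "S q = k - 1" "S r' = k" "S r = Suc k"
    and btw: "(rd_less r q \<and> rd_less q r') \<or> (rd_less r' q \<and> rd_less q r)"
  shows "dual_d k S = swap_entries S k (Suc k)"
proof -
  have c1: "cell_of S (k - 1) = q" using cell_of_eq[OF S v(1)] k by simp
  have c2: "cell_of S k = r'" using cell_of_eq[OF S v(2)] k by simp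
  have c3: "cell_of S (Suc k) = r" using cell_of_eq[OF S v(3)] by simp
  show ?thesis
  proof (cases "rd_less r q \<and> rd_less q r'")
    case True
    then have "rd_less r r'" using rd_less_trans by blast
    then have "\<not> rd_less r' r" "\<not> rd_less r' q" "\<not> rd_less q r" using True rd_less_asym by blast+
    then show ?thesis using True unfolding dual_d_def rlt_def c1 c2 c3 by simp
  next
    case False
    then have b: "rd_less r' q" "rd_less q r" using btw by auto
    then have "rd_less r' r" using rd_less_trans by blast
    then have "\<not> rd_less r r'" "\<not> rd_less q r'" using b rd_less_asym by blast+
    then show ?thesis using b \<open>rd_less r' r\<close> unfolding dual_d_def rlt_def c1 c2 c3 by simp
  qed
qed

lemma bridge:
  assumes T: "T \<in> syt L" and F: "ferrers L" and k: "Suc k \<le> card L"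
    and Dk: "Dk = {c \<in> L. T c \<le> Suc k}"
    and r: "removable Dk r" and r': "removable Dk r'" and ne: "r \<noteq> r'"
  shows "\<exists>S1 S2. S1 \<in> syt L \<and> S2 \<in> syt L \<and> S1 r = Suc k \<and> S1 r' = k \<and> S2 r' = Suc k \<and> S2 r = k
      \<and> 2 \<le> k \<and> (\<forall>c. c \<notin> Dk \<longrightarrow> S1 c = T c \<and> S2 c = T c)
      \<and> (\<forall>c\<in>Dk. S1 c \<le> Suc k \<and> S2 c \<le> Suc k) \<and> dual_d k S1 = S2"
proof -
  have FD: "ferrers Dk" using prefix_ferrers[OF T F] Dk by simp
  have cD: "card Dk = Suc k" using prefix_card[OF T k] Dk by simp
  have finD: "finite Dk" using ferrers_finite[OF FD] .
  obtain q where q: "removable (Dk - {r, r'}) q"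
    and btwc: "(content r < content q \<and> content q < content r') \<or> (content r' < content q \<and> content q < content r)"
    using corner_between_any[OF FD r r' ne] by blast
  have btw: "(rd_less r q \<and> rd_less q r') \<or> (rd_less r' q \<and> rd_less q r)"
    using btwc content_less_rd by blast
  have rD: "r \<in> Dk" using r by (simp add: removable_def)
  have r'D: "r' \<in> Dk" using r' by (simp add: removable_def)
  have qD1: "q \<in> Dk - {r, r'}" using q by (simp add: removable_def)
  define D1 where "D1 = Dk - {r, r'}"
  define D2 where "D2 = Dk - {r}"
  define D2' where "D2' = Dk - {r'}"
  define D3 where "D3 = D1 - {q}"
  have FD2: "ferrers D2" using ferrers_remove[OF FD r] D2_def by simp
  have FD2': "ferrers D2'" using ferrers_remove[OF FD r'] D2'_def by simp
  have r'2: "removable D2 r'" using removable_mono[OF r' _ Diff_subset] r'D ne D2_def by simp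
  have r2': "removable D2' r" using removable_mono[OF r _ Diff_subset] rD ne D2'_def by simp
  have e1: "D2 - {r'} = D1" "D2' - {r} = D1" unfolding D1_def D2_def D2'_def by auto
  have FD1: "ferrers D1" using ferrers_remove[OF FD2 r'2] e1 by simp
  have q1: "removable D1 q" using q D1_def by simp
  have FD3: "ferrers D3" using ferrers_remove[OF FD1 q1] D3_def by simp
  have qD: "q \<in> D1" using qD1 D1_def by simp
  have cD1: "card D1 = k - 1" using cD rD r'D ne finD unfolding D1_def
    by (simp add: card_Diff_subset)
  have cD2: "card D2 = k" using cD rD finD unfolding D2_def by simp
  have cD2': "card D2' = k" using cD r'D finD unfolding D2'_def by simp
  have "card D1 \<ge> 1" using qD finD D1_def card_0_eq[of D1] by (cases "card D1") auto
  then have k2: "2 \<le> k" using cD1 by simp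
  have cD3: "card D3 = k - 2" using cD1 qD finD unfolding D3_def by simp
  obtain Q where Q: "Q \<in> syt D3" using syt_nonempty[OF FD3] by blast
  have a1: "addable D3 q" using removable_addable[OF FD1 q1] D3_def by simp
  have iq: "insert q D3 = D1" using qD D3_def by auto
  define Q1 where "Q1 = Q(q := k - 1)"
  have Q1: "Q1 \<in> syt D1" using syt_extend[OF Q FD3 a1] iq cD3 k2 unfolding Q1_def
    by (simp add: Suc_diff_Suc numeral_2_eq_2)
  have a2: "addable D1 r'" using removable_addable[OF FD2 r'2] e1 by simp
  have a2': "addable D1 r" using removable_addable[OF FD2' r2'] e1 by simp
  have i2: "insert r' D1 = D2" "insert r D1 = D2'" using r'D rD ne unfolding D1_def D2_def D2'_def by auto
  define Q2 where "Q2 = Q1(r' := k)"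
  define Q2' where "Q2' = Q1(r := k)"
  have Q2: "Q2 \<in> syt D2" using syt_extend[OF Q1 FD1 a2] i2 cD1 k2 unfolding Q2_def by simp
  have Q2': "Q2' \<in> syt D2'" using syt_extend[OF Q1 FD1 a2'] i2 cD1 k2 unfolding Q2'_def by simp
  have a3: "addable D2 r" using removable_addable[OF FD r] D2_def by simp
  have a3': "addable D2' r'" using removable_addable[OF FD r'] D2'_def by simp
  have i3: "insert r D2 = Dk" "insert r' D2' = Dk" using rD r'D unfolding D2_def D2'_def by auto
  define Q3 where "Q3 = Q2(r := Suc k)"
  define Q3' where "Q3' = Q2'(r' := Suc k)"
  have Q3: "Q3 \<in> syt Dk" using syt_extend[OF Q2 FD2 a3] i3 cD2 unfolding Q3_def by simp
  have Q3': "Q3' \<in> syt Dk" using syt_extend[OF Q2' FD2' a3'] i3 cD2' unfolding Q3'_def by simp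
  define S1 where "S1 = glue Dk Q3 T"
  define S2 where "S2 = glue Dk Q3' T"
  have S1: "S1 \<in> syt L" using glue_syt[OF T F k Dk Q3] S1_def by simp
  have S2: "S2 \<in> syt L" using glue_syt[OF T F k Dk Q3'] S2_def by simp
  have qr: "q \<noteq> r" "q \<noteq> r'" using qD1 by auto
  have v1: "S1 r = Suc k" "S1 r' = k" "S1 q = k - 1"
    using rD r'D qD1 ne qr unfolding S1_def glue_def Q3_def Q2_def Q1_def by auto
  have v2: "S2 r' = Suc k" "S2 r = k" "S2 q = k - 1"
    using rD r'D qD1 ne qr unfolding S2_def glue_def Q3'_def Q2'_def Q1_def by auto
  have out: "\<forall>c. c \<notin> Dk \<longrightarrow> S1 c = T c \<and> S2 c = T c" unfolding S1_def S2_def glue_def by simp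
  have bnd: "\<forall>c\<in>Dk. S1 c \<le> Suc k \<and> S2 c \<le> Suc k"
    using syt_range[OF Q3] syt_range[OF Q3'] cD unfolding S1_def S2_def glue_def by auto
  have dd: "dual_d k S1 = swap_entries S1 k (Suc k)"
    using dual_d_swap[OF S1 k2 v1(3) v1(2) v1(1) btw] .
  have "swap_entries S1 k (Suc k) = S2"
  proof
    fix c
    show "swap_entries S1 k (Suc k) c = S2 c"
    proof (cases "c \<in> Dk")
      case False
      then have "S1 c = T c" "S2 c = T c" using out by blast+
      moreover have "T c \<noteq> k \<and> T c \<noteq> Suc k"
      proof (cases "c \<in> L")
        case True
        then show ?thesis using False Dk by auto
      next
        case False
        then show ?thesis using sytD(1)[OF T] k2 by auto
      qed
      ultimately show ?thesis unfolding swap_entries_def by simp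
    next
      case True
      show ?thesis
      proof (cases "c = r \<or> c = r'")
        case True
        then show ?thesis using v1 v2 unfolding swap_entries_def by auto
      next
        case False
        then have cD1': "c \<in> D1" using True D1_def by simp
        have "S1 c = Q1 c" "S2 c = Q1 c" using True False
          unfolding S1_def S2_def glue_def Q3_def Q3'_def Q2_def Q2'_def by auto
        moreover have "Q1 c \<le> k - 1" using syt_range[OF Q1 cD1'] cD1 by simp
        ultimately show ?thesis unfolding swap_entries_def using k2 by auto
      qed
    qed
  qed
  then have "dual_d k S1 = S2" using dd by simp
  then show ?thesis using S1 S2 v1 v2 k2 out bnd by blast
qed


lemma ex_addable_between:
  assumes F: "ferrers D" and p: "1 \<le> fst p" "1 \<le> snd p" "p \<notin> D" "c1 < content p" "content p < c2"
    and bar1: "\<And>u. 1 \<le> fst u \<Longrightarrow> 1 \<le> snd u \<Longrightarrow> u \<notin> D \<Longrightarrow> content u = c1 \<Longrightarrow> 2 \<le> snd u \<and> (fst u, snd u - 1) \<notin> D"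
    and bar2: "\<And>u. 1 \<le> fst u \<Longrightarrow> 1 \<le> snd u \<Longrightarrow> u \<notin> D \<Longrightarrow> content u = c2 \<Longrightarrow> 2 \<le> fst u \<and> (fst u - 1, snd u) \<notin> D"
  shows "\<exists>a. addable D a \<and> c1 < content a \<and> content a < c2"
proof -
  define U where "U = (\<lambda>u::nat\<times>nat. 1 \<le> fst u \<and> 1 \<le> snd u \<and> u \<notin> D \<and> c1 < content u \<and> content u < c2)"
  define f where "f = (\<lambda>c::nat\<times>nat. fst c + snd c)"
  have "U p" using p U_def by simp
  then obtain a where a: "U a" and mn: "\<And>u. U u \<Longrightarrow> f a \<le> f u"
    using ex_has_least_nat[of U p f] by blast
  obtain x y where axy: "a = (x,y)" by fastforce
  have ax: "1 \<le> x" "1 \<le> y" "(x,y) \<notin> D" "c1 < content (x,y)" "content (x,y) < c2"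
    using a axy U_def by auto
  have cxy: "content (x,y) = int x - int y" by (simp add: content_def)
  have l: "(x - 1, y) \<in> D" if x2: "2 \<le> x"
  proof (rule ccontr)
    assume nd: "(x - 1, y) \<notin> D"
    have cc: "content (x - 1, y) = content (x,y) - 1" using x2 by (simp add: content_def)
    show False
    proof (cases "c1 < content (x - 1, y)")
      case True
      then have "U (x - 1, y)" using nd ax x2 cc U_def by simp
      then show False using mn[of "(x-1,y)"] axy x2 by (simp add: f_def)
    next
      case False
      then have "content (x - 1, y) = c1" using cc ax by simp
      then have b: "2 \<le> y" "(x - 1, y - 1) \<notin> D" using bar1[of "(x-1,y)"] x2 ax nd by auto
      have "content (x - 1, y - 1) = content (x,y)" using b x2 by (simp add: content_def)
      moreover have "1 \<le> x - 1" "1 \<le> y - 1" using b x2 by linarith+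
      ultimately have "U (x - 1, y - 1)" using b ax unfolding U_def by simp
      then show False using mn[of "(x-1,y-1)"] axy x2 b by (simp add: f_def)
    qed
  qed
  have d: "(x, y - 1) \<in> D" if y2: "2 \<le> y"
  proof (rule ccontr)
    assume nd: "(x, y - 1) \<notin> D"
    have cc: "content (x, y - 1) = content (x,y) + 1" using y2 by (simp add: content_def)
    show False
    proof (cases "content (x, y - 1) < c2")
      case True
      then have "U (x, y - 1)" using nd ax y2 cc U_def by simp
      then show False using mn[of "(x,y-1)"] axy y2 by (simp add: f_def)
    next
      case False
      then have "content (x, y - 1) = c2" using cc ax by simp
      then have b: "2 \<le> x" "(x - 1, y - 1) \<notin> D" using bar2[of "(x,y-1)"] y2 ax nd by auto
      have "content (x - 1, y - 1) = content (x,y)" using b y2 by (simp add: content_def)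
      moreover have "1 \<le> x - 1" "1 \<le> y - 1" using b y2 by linarith+
      ultimately have "U (x - 1, y - 1)" using b ax unfolding U_def by simp
      then show False using mn[of "(x-1,y-1)"] axy y2 b by (simp add: f_def)
    qed
  qed
  have "addable D (x,y)" unfolding addable_def using ax l d by simp
  then show ?thesis using ax by blast
qed

lemma addable_between_removables:
  assumes F: "ferrers D" and r1: "removable D r1" and r2: "removable D r2"
    and c: "content r1 < content r2"
  shows "\<exists>a. addable D a \<and> content r1 < content a \<and> content a < content r2"
proof -
  obtain x1 y1 x2 y2 where rr: "r1 = (x1,y1)" "r2 = (x2,y2)" by fastforce
  have o: "y2 < y1" "x1 < x2" using removable_order[OF F, of x1 y1 x2 y2] r1 r2 c rr by auto
  have d1: "(x1,y1) \<in> D" "(Suc x1, y1) \<notin> D" "(x1, Suc y1) \<notin> D" using r1 rr by (auto simp: removable_def)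
  have d2: "(x2,y2) \<in> D" "(Suc x2, y2) \<notin> D" "(x2, Suc y2) \<notin> D" using r2 rr by (auto simp: removable_def)
  have p1: "1 \<le> x1" "1 \<le> y1" using ferrers_pos[OF F d1(1)] by auto
  have p2: "1 \<le> x2" "1 \<le> y2" using ferrers_pos[OF F d2(1)] by auto
  have c1: "content r1 = int x1 - int y1" and c2: "content r2 = int x2 - int y2"
    using rr by (simp_all add: content_def)
  show ?thesis
  proof (rule ex_addable_between[OF F, of "(Suc x1, y1)"])
    show "1 \<le> fst (Suc x1, y1)" "1 \<le> snd (Suc x1, y1)" "(Suc x1, y1) \<notin> D" using p1 d1 by auto
    show "content r1 < content (Suc x1, y1)" "content (Suc x1, y1) < content r2"
      using o unfolding c1 c2 by (simp_all add: content_def)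
  next
    fix u assume u: "1 \<le> fst u" "1 \<le> snd u" "u \<notin> D" "content u = content r1"
    obtain a b where ab: "u = (a,b)" by fastforce
    have cu: "int a - int b = int x1 - int y1" using u(4) ab c1 by (simp add: content_def)
    have "y1 < b"
    proof (rule ccontr)
      assume "\<not> y1 < b"
      then have "b \<le> y1" "a \<le> x1" using cu by linarith+
      then have "(a,b) \<in> D" using ferrersD[OF F d1(1)] u ab by simp
      then show False using u ab by simp
    qed
    then have "Suc x1 \<le> a" using cu by linarith
    have "(a, b - 1) \<notin> D"
    proof
      assume "(a, b - 1) \<in> D"
      then have "(Suc x1, y1) \<in> D" using ferrersD[OF F, of a "b-1" "Suc x1" y1] p1 \<open>Suc x1 \<le> a\<close> \<open>y1 < b\<close> by simp
      then show False using d1 by simp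
    qed
    then show "2 \<le> snd u \<and> (fst u, snd u - 1) \<notin> D" using ab \<open>y1 < b\<close> p1 by simp
  next
    fix u assume u: "1 \<le> fst u" "1 \<le> snd u" "u \<notin> D" "content u = content r2"
    obtain a b where ab: "u = (a,b)" by fastforce
    have cu: "int a - int b = int x2 - int y2" using u(4) ab c2 by (simp add: content_def)
    have "x2 < a"
    proof (rule ccontr)
      assume "\<not> x2 < a"
      then have "a \<le> x2" "b \<le> y2" using cu by linarith+
      then have "(a,b) \<in> D" using ferrersD[OF F d2(1)] u ab by simp
      then show False using u ab by simp
    qed
    then have "Suc y2 \<le> b" using cu by linarith
    have "(a - 1, b) \<notin> D"
    proof
      assume "(a - 1, b) \<in> D"
      then have "(x2, Suc y2) \<in> D" using ferrersD[OF F, of "a-1" b x2 "Suc y2"] p2 \<open>Suc y2 \<le> b\<close> \<open>x2 < a\<close> by simp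
      then show False using d2 by simp
    qed
    then show "2 \<le> fst u \<and> (fst u - 1, snd u) \<notin> D" using ab \<open>x2 < a\<close> p2 by simp
  qed
qed

lemma addable_order:
  assumes F: "ferrers D" and a: "addable D (x1,y1)" and c: "addable D (x2,y2)"
    and ne: "(x1,y1) \<noteq> (x2,y2)" and le: "content (x1,y1) \<le> content (x2,y2)"
  shows "y2 < y1 \<and> x1 < x2"
proof -
  have a': "(x1,y1) \<notin> D" "1 \<le> x1" "1 \<le> y1" "2 \<le> x1 \<Longrightarrow> (x1 - 1, y1) \<in> D" "2 \<le> y1 \<Longrightarrow> (x1, y1 - 1) \<in> D"
    using a by (auto simp: addable_def)
  have c': "(x2,y2) \<notin> D" "1 \<le> x2" "1 \<le> y2" "2 \<le> x2 \<Longrightarrow> (x2 - 1, y2) \<in> D" "2 \<le> y2 \<Longrightarrow> (x2, y2 - 1) \<in> D"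
    using c by (auto simp: addable_def)
  have cl: "int x1 - int y1 \<le> int x2 - int y2" using le by (simp add: content_def)
  have "y2 < y1"
  proof (rule ccontr)
    assume "\<not> y2 < y1"
    then have "x1 \<le> x2" using cl by linarith
    show False
    proof (cases "x1 < x2")
      case True
      then have "2 \<le> x2" using a' by linarith
      then have "(x2 - 1, y2) \<in> D" using c' by simp
      moreover have "x1 \<le> x2 - 1" "y1 \<le> y2" using True \<open>\<not> y2 < y1\<close> by simp_all
      ultimately have "(x1, y1) \<in> D" using ferrersD[OF F, of "x2 - 1" y2 x1 y1] a' by simp
      then show False using a' by simp
    next
      case False
      then have "x1 = x2" "y1 = y2" using \<open>x1 \<le> x2\<close> cl \<open>\<not> y2 < y1\<close> by linarith+
      then show False using ne by simp
    qed
  qed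
  moreover have "x1 < x2"
  proof (rule ccontr)
    assume "\<not> x1 < x2"
    have "(x1, y1 - 1) \<in> D" using a' \<open>y2 < y1\<close> c' by simp
    moreover have "x2 \<le> x1" "y2 \<le> y1 - 1" using \<open>\<not> x1 < x2\<close> \<open>y2 < y1\<close> by simp_all
    ultimately have "(x2, y2) \<in> D" using ferrersD[OF F, of x1 "y1-1" x2 y2] c' by simp
    then show False using c' by simp
  qed
  ultimately show ?thesis by simp
qed

lemma removable_between_addables:
  assumes F: "ferrers D" and a: "addable D (x1,y1)" and c: "addable D (x2,y2)"
    and ne: "(x1,y1) \<noteq> (x2,y2)" and le: "content (x1,y1) \<le> content (x2,y2)"
  shows "\<exists>r. removable D r \<and> content (x1,y1) < content r \<and> content r < content (x2,y2)"
proof -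
  have o: "y2 < y1" "x1 < x2" using addable_order[OF F a c ne le] by auto
  have a': "(x1,y1) \<notin> D" "1 \<le> x1" "1 \<le> y1" "2 \<le> x1 \<Longrightarrow> (x1 - 1, y1) \<in> D" "2 \<le> y1 \<Longrightarrow> (x1, y1 - 1) \<in> D"
    using a by (auto simp: addable_def)
  have c': "(x2,y2) \<notin> D" "1 \<le> x2" "1 \<le> y2" "2 \<le> x2 \<Longrightarrow> (x2 - 1, y2) \<in> D" "2 \<le> y2 \<Longrightarrow> (x2, y2 - 1) \<in> D"
    using c by (auto simp: addable_def)
  have "2 \<le> x2" using o a' by linarith
  then have L2: "(x2 - 1, y2) \<in> D" using c' by simp
  have L1: "(x1, y1 - 1) \<in> D" using a' o c' by simp
  have pD: "(x1, y2) \<in> D" using ferrersD[OF F L2, of x1 y2] a' c' o by simp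
  show ?thesis
  proof (rule ex_corner_between[OF F pD])
    show "content (x1, y1) < content (x1, y2)" "content (x1, y2) < content (x2, y2)"
      using o by (simp_all add: content_def)
  next
    fix u assume u: "u \<in> D" "content u = content (x2,y2)"
    obtain p q where pq: "u = (p,q)" by fastforce
    have cu: "int p - int q = int x2 - int y2" using u pq by (simp add: content_def)
    have pos: "1 \<le> p" "1 \<le> q" using ferrers_pos[OF F] u pq by auto
    have "q < y2"
    proof (rule ccontr)
      assume "\<not> q < y2"
      then have "x2 \<le> p" using cu by linarith
      then have "(x2,y2) \<in> D" using ferrersD[OF F, of p q x2 y2] u pq c' \<open>\<not> q < y2\<close> by simp
      then show False using c' by simp
    qed
    then have "p < x2" using cu by linarith
    have "(p, Suc q) \<in> D" using ferrersD[OF F L2, of p "Suc q"] pos \<open>q < y2\<close> \<open>p < x2\<close> by simp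
    then show "(fst u, Suc (snd u)) \<in> D" using pq by simp
  next
    fix u assume u: "u \<in> D" "content u = content (x1,y1)"
    obtain p q where pq: "u = (p,q)" by fastforce
    have cu: "int p - int q = int x1 - int y1" using u pq by (simp add: content_def)
    have pos: "1 \<le> p" "1 \<le> q" using ferrers_pos[OF F] u pq by auto
    have "p < x1"
    proof (rule ccontr)
      assume "\<not> p < x1"
      then have "y1 \<le> q" using cu by linarith
      then have "(x1,y1) \<in> D" using ferrersD[OF F, of p q x1 y1] u pq a' \<open>\<not> p < x1\<close> by simp
      then show False using a' by simp
    qed
    then have "q < y1" using cu by linarith
    have "(Suc p, q) \<in> D" using ferrersD[OF F L1, of "Suc p" q] pos \<open>q < y1\<close> \<open>p < x1\<close> by simp
    then show "(Suc (fst u), snd u) \<in> D" using pq by simp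
  qed
qed

definition right_cell :: "(nat \<times> nat) set \<Rightarrow> nat \<times> nat" where
  "right_cell D = (Suc (Max (insert 0 {x. (x,1) \<in> D})), 1)"

definition top_cell :: "(nat \<times> nat) set \<Rightarrow> nat \<times> nat" where
  "top_cell D = (1, Suc (Max (insert 0 {y. (1,y) \<in> D})))"

lemma right_cell:
  assumes F: "ferrers D"
  shows "addable D (right_cell D) \<and> (\<forall>c\<in>D. content c < content (right_cell D))"
proof -
  define K where "K = Max (insert 0 {x. (x,1) \<in> D})"
  have fin: "finite {x. (x,1) \<in> D}"
    using finite_subset[of "{x. (x,1) \<in> D}" "fst ` D"] ferrers_finite[OF F] by force
  have ub: "x \<le> K" if "(x,1) \<in> D" for x using fin that K_def by simp
  have kin: "K \<in> insert 0 {x. (x,1) \<in> D}" unfolding K_def by (rule Max_in) (use fin in auto)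
  have rc: "right_cell D = (Suc K, 1)" unfolding right_cell_def K_def by simp
  have all: "content c < content (right_cell D)" if "c \<in> D" for c
  proof -
    obtain x y where c: "c = (x,y)" by fastforce
    have p: "1 \<le> x" "1 \<le> y" using ferrers_pos[OF F] that c by auto
    have "(x,1) \<in> D" using ferrersD[OF F, of x y x 1] that c p by simp
    then have "x \<le> K" using ub by simp
    then show ?thesis using c p rc by (simp add: content_def)
  qed
  have "(Suc K, 1) \<notin> D" using ub by fastforce
  moreover have "(K, 1) \<in> D" if "2 \<le> Suc K"
  proof -
    from kin have "K = 0 \<or> (K,1) \<in> D" by blast
    then show ?thesis using that by auto
  qed
  ultimately have "addable D (right_cell D)" unfolding addable_def rc by simp
  then show ?thesis using all by blast
qed

lemma top_cell:
  assumes F: "ferrers D"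
  shows "addable D (top_cell D) \<and> (\<forall>c\<in>D. content (top_cell D) < content c)"
proof -
  define K where "K = Max (insert 0 {y. (1,y) \<in> D})"
  have fin: "finite {y. (1,y) \<in> D}"
    using finite_subset[of "{y. (1,y) \<in> D}" "snd ` D"] ferrers_finite[OF F] by force
  have ub: "y \<le> K" if "(1,y) \<in> D" for y using fin that K_def by simp
  have kin: "K \<in> insert 0 {y. (1,y) \<in> D}" unfolding K_def by (rule Max_in) (use fin in auto)
  have tc: "top_cell D = (1, Suc K)" unfolding top_cell_def K_def by simp
  have all: "content (top_cell D) < content c" if "c \<in> D" for c
  proof -
    obtain x y where c: "c = (x,y)" by fastforce
    have p: "1 \<le> x" "1 \<le> y" using ferrers_pos[OF F] that c by auto
    have "(1,y) \<in> D" using ferrersD[OF F, of x y 1 y] that c p by simp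
    then have "y \<le> K" using ub by simp
    then show ?thesis using c p tc by (simp add: content_def)
  qed
  have "(1, Suc K) \<notin> D" using ub by fastforce
  moreover have "(1, K) \<in> D" if "2 \<le> Suc K"
  proof -
    from kin have "K = 0 \<or> (1,K) \<in> D" by blast
    then show ?thesis using that by auto
  qed
  ultimately have "addable D (top_cell D)" unfolding addable_def tc by simp
  then show ?thesis using all by blast
qed

lemma addable_empty: "addable {} c \<Longrightarrow> c = (1,1)"
  unfolding addable_def by (cases c) auto


lemma partition_nth_ge:
  assumes "is_partition lam" "i \<le> j" "j < length lam"
  shows "lam ! j \<le> lam ! i"
proof (cases "i = j")
  case False
  then show ?thesis using assms by (auto simp: is_partition_def sorted_wrt_iff_nth_less)
qed simp

lemma partition_pos: "is_partition lam \<Longrightarrow> j < length lam \<Longrightarrow> 0 < lam ! j"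
  unfolding is_partition_def by (auto simp: in_set_conv_nth)

lemma mem_cells: "(i,j) \<in> cells lam \<longleftrightarrow> 1 \<le> j \<and> j \<le> length lam \<and> 1 \<le> i \<and> i \<le> lam ! (j - 1)"
  unfolding cells_def by simp

lemma addcell_list:
  assumes P: "is_partition lam" and a: "addable (cells lam) (x,y)"
  shows "\<exists>rho. is_partition rho \<and> cells rho = insert (x,y) (cells lam)"
proof -
  have a': "(x,y) \<notin> cells lam" "1 \<le> x" "1 \<le> y" "2 \<le> x \<Longrightarrow> (x - 1, y) \<in> cells lam"
    "2 \<le> y \<Longrightarrow> (x, y - 1) \<in> cells lam"
    using a by (auto simp: addable_def)
  show ?thesis
  proof (cases "y \<le> length lam")
    case True
    have pos: "0 < lam ! (y-1)" using partition_pos[OF P] True a' by simp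
    have "2 \<le> x"
    proof (rule ccontr)
      assume "\<not> 2 \<le> x"
      then have "x = 1" using a' by simp
      then have "(x,y) \<in> cells lam" using True a' pos by (simp add: mem_cells)
      then show False using a' by simp
    qed
    then have "x - 1 \<le> lam ! (y-1)" using a'(4) by (simp add: mem_cells)
    moreover have "\<not> x \<le> lam ! (y-1)" using a' True by (simp add: mem_cells)
    ultimately have xe: "x = Suc (lam ! (y-1))" by simp
    have above: "x \<le> lam ! (y-2)" if "2 \<le> y" using a'(5)[OF that] that by (simp add: mem_cells numeral_2_eq_2)
    define rho where "rho = lam[y-1 := x]"
    have len: "length rho = length lam" using rho_def by simp
    have nth: "rho ! j = (if j = y - 1 then x else lam ! j)" if "j < length lam" for j
      using that True a' unfolding rho_def by auto
    have sorted: "rho ! j \<le> rho ! i" if "i < j" "j < length rho" for i j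
    proof -
      have ij: "lam ! j \<le> lam ! i" using partition_nth_ge[OF P, of i j] that len by simp
      show ?thesis
      proof (cases "j = y - 1")
        case True
        then have "i \<le> y - 2" using that by simp
        then have "lam ! (y-2) \<le> lam ! i" using partition_nth_ge[OF P, of i "y-2"] that len True by simp
        moreover have "2 \<le> y" using True that by simp
        ultimately show ?thesis using nth that len True above by auto
      next
        case False
        then show ?thesis using nth that len ij xe partition_nth_ge[OF P, of "y-1" j] True a'
          by (cases "i = y - 1") auto
      qed
    qed
    have "is_partition rho"
    proof -
      have "sorted_wrt (\<ge>) rho" unfolding sorted_wrt_iff_nth_less using sorted by auto
      moreover have "\<forall>v\<in>set rho. 0 < v"
      proof
        fix v assume "v \<in> set rho"
        then obtain j where "j < length rho" "rho ! j = v" by (auto simp: in_set_conv_nth)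
        then show "0 < v" using nth partition_pos[OF P] len xe by (cases "j = y - 1") auto
      qed
      ultimately show ?thesis by (simp add: is_partition_def)
    qed
    moreover have "cells rho = insert (x,y) (cells lam)"
    proof (rule set_eqI)
      fix c :: "nat \<times> nat"
      obtain i j where c: "c = (i,j)" by fastforce
      show "c \<in> cells rho \<longleftrightarrow> c \<in> insert (x,y) (cells lam)"
      proof (cases "1 \<le> j \<and> j \<le> length lam")
        case True
        then have "rho ! (j-1) = (if j = y then x else lam ! (j-1))" using nth[of "j-1"] a' by auto
        then show ?thesis using c True xe len by (auto simp: mem_cells)
      next
        case False
        then show ?thesis using c len \<open>y \<le> length lam\<close> a' by (auto simp: mem_cells)
      qed
    qed
    ultimately show ?thesis by blast
  next
    case False
    have ye: "y = Suc (length lam)"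
    proof (cases "2 \<le> y")
      case True
      then have "y - 1 \<le> length lam" using a'(5) by (simp add: mem_cells)
      then show ?thesis using False by simp
    next
      case False
      then show ?thesis using \<open>\<not> y \<le> length lam\<close> a' by simp
    qed
    have xe: "x = 1"
    proof (rule ccontr)
      assume "x \<noteq> 1"
      then have "(x - 1, y) \<in> cells lam" using a' by simp
      then show False using ye by (simp add: mem_cells)
    qed
    define rho where "rho = lam @ [1]"
    have "is_partition rho"
      using P unfolding rho_def is_partition_def by (auto simp: sorted_wrt_append)
    moreover have "cells rho = insert (x,y) (cells lam)"
      unfolding rho_def cells_snoc using xe ye by auto
    ultimately show ?thesis by blast
  qed
qed

lemma ferrers_partition:
  assumes "ferrers D" shows "\<exists>rho. is_partition rho \<and> cells rho = D"
  using assms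
proof (induction "card D" arbitrary: D)
  case 0
  then have "D = {}" using ferrers_finite by auto
  moreover have "cells [] = {}" by (simp add: cells_def)
  moreover have "is_partition []" by (simp add: is_partition_def)
  ultimately show ?case by blast
next
  case (Suc k)
  then have "D \<noteq> {}" by auto
  then obtain r where r: "removable D r" using ex_removable Suc.prems by blast
  have F': "ferrers (D - {r})" using ferrers_remove[OF Suc.prems r] .
  have rD: "r \<in> D" using r by (simp add: removable_def)
  have "card (D - {r}) = k" using Suc.hyps(2) rD by simp
  then obtain lam where lam: "is_partition lam" "cells lam = D - {r}" using Suc.hyps(1)[OF _ F'] by auto
  have ad: "addable (cells lam) r" using removable_addable[OF Suc.prems r] lam by simp
  obtain x y where xy: "r = (x,y)" by fastforce
  obtain rho where "is_partition rho" "cells rho = insert r (cells lam)"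
    using addcell_list[OF lam(1)] ad xy by blast
  then show ?case using lam rD by (intro exI[of _ rho]) auto
qed


definition nextc :: "(nat \<Rightarrow> int) \<Rightarrow> nat \<Rightarrow> nat \<Rightarrow> (nat \<times> nat) set \<Rightarrow> nat \<times> nat" where
  "nextc s n m D = (if s (Suc n + m) = 1 then right_cell D else top_cell D)"

primrec Ds :: "(nat \<times> nat) set \<Rightarrow> nat \<times> nat \<Rightarrow> (nat \<Rightarrow> int) \<Rightarrow> nat \<Rightarrow> nat \<Rightarrow> (nat \<times> nat) set" where
  "Ds L a s n 0 = insert a L"
| "Ds L a s n (Suc m) = insert (nextc s n m (Ds L a s n m)) (Ds L a s n m)"

fun pos :: "(nat \<times> nat) set \<Rightarrow> nat \<times> nat \<Rightarrow> (nat \<Rightarrow> int) \<Rightarrow> nat \<Rightarrow> nat \<Rightarrow> nat \<times> nat" where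
  "pos L a s n 0 = a"
| "pos L a s n (Suc m) = nextc s n m (Ds L a s n m)"

primrec Af :: "(nat \<times> nat) set \<Rightarrow> nat \<times> nat \<Rightarrow> (nat \<Rightarrow> int) \<Rightarrow> nat \<Rightarrow> nat \<Rightarrow> tableau" where
  "Af L a s n 0 = (\<lambda>c. if c = a then Suc n else 0)"
| "Af L a s n (Suc m) = (Af L a s n m)(pos L a s n (Suc m) := Suc (Suc (n + m)))"

locale constr =
  fixes L :: "(nat \<times> nat) set" and a :: "nat \<times> nat" and s :: "nat \<Rightarrow> int" and n :: nat
  assumes FL: "ferrers L" and aL: "addable L a" and cL: "card L = n"
begin

abbreviation "DD \<equiv> Ds L a s n"
abbreviation "PP \<equiv> pos L a s n"
abbreviation "AA \<equiv> Af L a s n"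

lemma nextc_props:
  assumes "ferrers D"
  shows "addable D (nextc s n m D)"
    "s (Suc n + m) = 1 \<Longrightarrow> \<forall>c\<in>D. content c < content (nextc s n m D)"
    "s (Suc n + m) \<noteq> 1 \<Longrightarrow> \<forall>c\<in>D. content (nextc s n m D) < content c"
  using right_cell[OF assms] top_cell[OF assms] unfolding nextc_def by auto

lemma Ds_props: "ferrers (DD m) \<and> L \<subseteq> DD m \<and> card (DD m) = Suc n + m \<and> PP m \<in> DD m \<and> a \<in> DD m"
proof (induction m)
  case 0
  have "ferrers (insert a L)" using ferrers_insert[OF FL aL] .
  moreover have "card (insert a L) = Suc n" using aL cL ferrers_finite[OF FL] by (simp add: addable_def)
  ultimately show ?case by auto
next
  case (Suc m)
  have ad: "addable (DD m) (nextc s n m (DD m))" using nextc_props(1) Suc.IH by blast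
  have "ferrers (DD (Suc m))" using ferrers_insert[OF _ ad] Suc.IH by simp
  moreover have "card (DD (Suc m)) = Suc n + Suc m"
    using ad Suc.IH ferrers_finite[of "DD m"] by (simp add: addable_def)
  ultimately show ?case using Suc.IH by auto
qed

lemma ferrers_Ds: "ferrers (DD m)" using Ds_props by blast
lemma L_sub_Ds: "L \<subseteq> DD m" using Ds_props by blast
lemma card_Ds: "card (DD m) = Suc n + m" using Ds_props by blast
lemma pos_in_Ds: "PP m \<in> DD m" using Ds_props by blast

lemma addable_next: "addable (DD m) (PP (Suc m))"
  using nextc_props(1)[OF ferrers_Ds] by simp

lemma pos_notin: "PP (Suc m) \<notin> DD m" using addable_next by (simp add: addable_def)

lemma Ds_mono: "j \<le> m \<Longrightarrow> DD j \<subseteq> DD m"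
  by (induction m) (auto simp: le_Suc_eq)

lemma pos_notin_L: "PP j \<notin> L"
proof (cases j)
  case 0
  then show ?thesis using aL by (simp add: addable_def)
next
  case (Suc m)
  then show ?thesis using pos_notin[of m] L_sub_Ds[of m] by auto
qed

lemma pos_inj: "j < m \<Longrightarrow> PP j \<noteq> PP m"
proof -
  assume "j < m"
  then obtain m' where m: "m = Suc m'" "j \<le> m'" by (cases m) auto
  have "PP j \<in> DD m'" using pos_in_Ds[of j] Ds_mono[OF m(2)] by auto
  then show ?thesis using pos_notin[of m'] m by auto
qed

lemma Af_pos: "j \<le> m \<Longrightarrow> AA m (PP j) = Suc n + j"
proof (induction m)
  case 0
  then show ?case by simp
next
  case (Suc m)
  show ?case
  proof (cases "j = Suc m")
    case True
    then show ?thesis by simp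
  next
    case False
    then have "j \<le> m" "PP j \<noteq> PP (Suc m)" using Suc.prems pos_inj[of j "Suc m"] by auto
    then show ?thesis using Suc.IH by simp
  qed
qed

lemma Af_zero: "c \<notin> DD m - L \<Longrightarrow> AA m c = 0"
proof (induction m)
  case 0
  then show ?case using aL by (auto simp: addable_def)
next
  case (Suc m)
  then show ?case using pos_notin_L[of "Suc m"] by auto
qed

lemma Af_bij: "bij_betw (AA m) (DD m - L) {Suc n..Suc n + m}"
proof (induction m)
  case 0
  have "insert a L - L = {a}" using aL by (auto simp: addable_def)
  then show ?case by (simp add: bij_betw_def)
next
  case (Suc m)
  have e: "DD (Suc m) - L = (DD m - L) \<union> {PP (Suc m)}" using pos_notin_L[of "Suc m"] by auto
  have eqs: "\<And>c. c \<in> DD m - L \<Longrightarrow> AA (Suc m) c = AA m c" using pos_notin[of m] by auto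
  have b1: "bij_betw (AA (Suc m)) (DD m - L) {Suc n..Suc n + m}"
    using Suc.IH bij_betw_cong[of "DD m - L" "AA (Suc m)" "AA m" "{Suc n..Suc n + m}", OF eqs] by simp
  have X: "bij_betw (AA (Suc m)) ((DD m - L) \<union> {PP (Suc m)}) ({Suc n..Suc n + m} \<union> {AA (Suc m) (PP (Suc m))})"
    using b1 pos_notin[of m] by (intro notIn_Un_bij_betw) auto
  have se: "{Suc n..Suc n + m} \<union> {AA (Suc m) (PP (Suc m))} = {Suc n..Suc n + Suc m}" by auto
  show ?case by (subst e, subst se[symmetric], rule X)
qed

lemma augment_syt:
  assumes P: "P \<in> syt L" and Lc: "L = cells lam"
  shows "augment lam (AA m) P \<in> syt (DD m)"
proof (induction m)
  case 0
  have eq: "augment lam (AA 0) P = P(a := Suc (card L))"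
  proof
    fix c show "augment lam (AA 0) P c = (P(a := Suc (card L))) c"
      using aL sytD(1)[OF P] cL unfolding augment_def Lc[symmetric] by (auto simp: addable_def)
  qed
  have ex: "P(a := Suc (card L)) \<in> syt (insert a L)" using syt_extend[OF P FL aL] .
  show ?case by (simp only: eq ex Ds.simps(1))
next
  case (Suc m)
  have eq: "augment lam (AA (Suc m)) P = (augment lam (AA m) P)(PP (Suc m) := Suc (card (DD m)))"
  proof
    fix c show "augment lam (AA (Suc m)) P c = ((augment lam (AA m) P)(PP (Suc m) := Suc (card (DD m)))) c"
      using pos_notin_L[of "Suc m"] card_Ds[of m] unfolding augment_def Lc[symmetric] by auto
  qed
  have ex: "(augment lam (AA m) P)(PP (Suc m) := Suc (card (DD m))) \<in> syt (insert (PP (Suc m)) (DD m))"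
    using syt_extend[OF Suc.IH ferrers_Ds addable_next] .
  have "insert (PP (Suc m)) (DD m) = DD (Suc m)" by simp
  then show ?case using eq ex by metis
qed

lemma pos_content:
  "s (Suc n + m) = 1 \<Longrightarrow> content (PP m) < content (PP (Suc m))"
  "s (Suc n + m) \<noteq> 1 \<Longrightarrow> content (PP (Suc m)) < content (PP m)"
  using nextc_props(2,3)[OF ferrers_Ds[of m]] pos_in_Ds[of m] by auto

end


lemma prefix_max_removable:
  assumes T: "T \<in> syt D" and r: "r \<in> D" "T r = k"
  shows "removable {c \<in> D. T c \<le> k} r"
proof -
  obtain x y where rr: "r = (x,y)" by fastforce
  have "(Suc x, y) \<notin> {c \<in> D. T c \<le> k}" using sytD(3)[OF T, of x y] r rr by fastforce
  moreover have "(x, Suc y) \<notin> {c \<in> D. T c \<le> k}" using sytD(4)[OF T, of x y] r rr by fastforce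
  ultimately show ?thesis using r rr by (simp add: removable_def)
qed

lemma cell_of_val:
  assumes T: "T \<in> syt D" and k: "1 \<le> k" "k \<le> card D"
  shows "cell_of T k \<in> D \<and> T (cell_of T k) = k"
proof -
  obtain c where "c \<in> D" "T c = k" using syt_surj[OF T k] by blast
  then show ?thesis using cell_of_eq[OF T _ k(1)] by simp
qed

lemma rd_less_content_le: "rd_less c c' \<Longrightarrow> content c \<le> content c'"
  unfolding rd_less_content by auto

locale main =
  fixes V :: "'v set" and \<sigma> :: "'v \<Rightarrow> nat \<Rightarrow> int" and E :: "nat \<Rightarrow> 'v set set"
    and n N :: nat and lam :: "nat list" and \<phi> :: "'v \<Rightarrow> tableau"
  assumes deg: "dual_equivalence_graph n N V \<sigma> E"
    and conn: "connected_graph n V E"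
    and nN: "n < N"
    and part: "is_partition lam" and sz: "sum_list lam = n"
    and iso: "graph_iso n n V (restr_sig n \<sigma>) (restr_edges n E)
                (SYT lam) desc_sig (tab_edges n (SYT lam)) \<phi>"
begin

abbreviation "LL \<equiv> cells lam"

lemma FL: "ferrers LL" using partition_ferrers[OF part] .
lemma cL: "card LL = n" using cells_finite_card[of lam] sz by simp
lemma SYT_eq: "SYT lam = syt LL" by (rule SYT_syt)

lemma bij: "bij_betw \<phi> V (syt LL)" using iso SYT_eq by (simp add: graph_iso_def)

lemma sig_lt: "v \<in> V \<Longrightarrow> 1 \<le> k \<Longrightarrow> k < n \<Longrightarrow> desc_sig (\<phi> v) k = \<sigma> v k"
  using iso by (simp add: graph_iso_def restr_sig_def)

lemma edges_eq: "1 < i \<Longrightarrow> i < n \<Longrightarrow> image (image \<phi>) (E i) = tab_edges n (syt LL) i"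
  using iso SYT_eq by (simp add: graph_iso_def restr_edges_def)

lemma scg: "signed_colored_graph n N V \<sigma> E" using deg by (simp add: dual_equivalence_graph_def)

lemma finV: "finite V" using scg by (simp add: signed_colored_graph_def)

lemma pm: "v \<in> V \<Longrightarrow> 1 \<le> k \<Longrightarrow> k < N \<Longrightarrow> \<sigma> v k = 1 \<or> \<sigma> v k = -1"
  using scg by (simp add: signed_colored_graph_def)

lemma edge_form: "1 < i \<Longrightarrow> i < n \<Longrightarrow> e \<in> E i \<Longrightarrow> \<exists>x\<in>V. \<exists>y\<in>V. x \<noteq> y \<and> e = {x,y}"
  using scg by (simp add: signed_colored_graph_def)

lemma ax2: "1 < i \<Longrightarrow> i < n \<Longrightarrow> {w,x} \<in> E i \<Longrightarrow> 1 \<le> h \<Longrightarrow> h < N \<Longrightarrow> Suc i < h \<Longrightarrow> \<sigma> w h = \<sigma> x h"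
  using deg unfolding dual_equivalence_graph_def deg_ax2_def by blast

lemma ax3: "1 < i \<Longrightarrow> i < n \<Longrightarrow> {w,x} \<in> E i \<Longrightarrow> Suc i < N \<Longrightarrow> \<sigma> w (Suc i) = - \<sigma> x (Suc i)
   \<Longrightarrow> \<sigma> w (Suc i) = - \<sigma> w i"
  using deg unfolding dual_equivalence_graph_def deg_ax3_def by blast

definition psi :: "tableau \<Rightarrow> 'v" where "psi = inv_into V \<phi>"

lemma psi1: "S \<in> syt LL \<Longrightarrow> psi S \<in> V \<and> \<phi> (psi S) = S"
  using bij unfolding psi_def bij_betw_def by (auto intro: inv_into_into f_inv_into_f)

lemma psi2: "v \<in> V \<Longrightarrow> psi (\<phi> v) = v"
  using bij unfolding psi_def bij_betw_def by (simp add: inv_into_f_f)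

lemma phi_in: "v \<in> V \<Longrightarrow> \<phi> v \<in> syt LL"
  using bij unfolding bij_betw_def by auto

lemma edge_lift:
  assumes S: "S \<in> syt LL" and i: "1 < i" "i < n" and ne: "dual_d i S \<noteq> S"
  shows "{psi S, psi (dual_d i S)} \<in> E i \<and> dual_d i S \<in> syt LL"
proof -
  have "{S, dual_d i S} \<in> tab_edges n (syt LL) i"
    unfolding tab_edges_def using i S ne by auto
  then have "{S, dual_d i S} \<in> image (image \<phi>) (E i)" using edges_eq[OF i] by simp
  then obtain e where e: "e \<in> E i" "\<phi> ` e = {S, dual_d i S}" by auto
  obtain x y where xy: "x \<in> V" "y \<in> V" "x \<noteq> y" "e = {x,y}" using edge_form[OF i e(1)] by blast
  have im: "{\<phi> x, \<phi> y} = {S, dual_d i S}" using e(2) xy(4) by simp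
  have "dual_d i S \<in> {\<phi> x, \<phi> y}" using im by blast
  then obtain z where z: "z \<in> {x,y}" "dual_d i S = \<phi> z" by blast
  have zV: "z \<in> V" using z xy by blast
  have dS: "dual_d i S \<in> syt LL" unfolding z(2) by (rule phi_in[OF zV])
  have "S \<in> {\<phi> x, \<phi> y}" using im by blast
  then obtain z1 where z1: "z1 \<in> {x,y}" "S = \<phi> z1" by blast
  have z1V: "z1 \<in> V" using z1 xy by blast
  have "psi S = z1" unfolding z1(2) using psi2[OF z1V] .
  moreover have "psi (dual_d i S) = z" unfolding z(2) using psi2[OF zV] .
  moreover have "psi S \<noteq> psi (dual_d i S)" using psi1[OF S] psi1[OF dS] ne by metis
  ultimately have "psi S \<in> {x,y}" "psi (dual_d i S) \<in> {x,y}" "psi S \<noteq> psi (dual_d i S)" using z z1 by auto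
  then have "{psi S, psi (dual_d i S)} = {x,y}" by auto
  then show ?thesis using e(1) xy(4) dS by simp
qed

definition Rm :: "nat \<Rightarrow> (tableau \<times> tableau) set" where
  "Rm m = {(S, S'). S \<in> syt LL \<and> S' \<in> syt LL \<and> (\<exists>i. 1 < i \<and> i < m \<and> S' = dual_d i S)}"

abbreviation "Pth m \<equiv> (Rm m \<union> (Rm m)\<inverse>)\<^sup>*"

lemma Rm_sigma:
  assumes "(S, S') \<in> Rm (n - 1)" shows "\<sigma> (psi S) n = \<sigma> (psi S') n"
proof -
  obtain i where S: "S \<in> syt LL" "S' \<in> syt LL" "1 < i" "i < n - 1" "S' = dual_d i S"
    using assms unfolding Rm_def by blast
  show ?thesis
  proof (cases "S' = S")
    case True then show ?thesis by simp
  next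
    case False
    then have "{psi S, psi S'} \<in> E i" using edge_lift[OF S(1), of i] S by auto
    then show ?thesis using ax2[of i "psi S" "psi S'" n] S nN by simp
  qed
qed

lemma path_sigma:
  assumes "(S, S') \<in> Pth (n - 1)" shows "\<sigma> (psi S) n = \<sigma> (psi S') n"
  using assms
proof (induction rule: rtrancl_induct)
  case base then show ?case by simp
next
  case (step y z)
  then show ?case using Rm_sigma by auto
qed

lemma Rm_mono: "m \<le> m' \<Longrightarrow> Rm m \<subseteq> Rm m'"
  unfolding Rm_def by fastforce

lemma Pth_mono: "m \<le> m' \<Longrightarrow> Pth m \<subseteq> Pth m'"
  using Rm_mono by (intro rtrancl_mono) blast

lemma agree_helper:
  assumes T: "T \<in> syt LL" and S: "S \<in> syt LL" and Dk: "Dk = {c \<in> LL. T c \<le> Suc m}"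
    and r: "T r = Suc m" "S r = Suc m"
    and out: "\<forall>c. c \<notin> Dk \<longrightarrow> S c = T c" and bnd: "\<forall>c\<in>Dk. S c \<le> Suc m"
  shows "\<forall>c. m < T c \<or> m < S c \<longrightarrow> T c = S c"
proof (intro allI impI)
  fix c assume h: "m < T c \<or> m < S c"
  have rL: "r \<in> LL" using syt_val_in[OF T] r by simp
  show "T c = S c"
  proof (cases "c \<in> Dk")
    case False then show ?thesis using out[rule_format, of c] by simp
  next
    case True
    then have cL: "c \<in> LL" "T c \<le> Suc m" using Dk by auto
    have "S c \<le> Suc m" using bnd True by blast
    note cL = cL this
    show ?thesis
    proof (cases "m < T c")
      case True
      then have "T c = T r" using cL r by simp
      then have "c = r" using syt_inj[OF T cL(1) rL] by simp
      then show ?thesis using r by simp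
    next
      case False
      then have "m < S c" using h by simp
      then have "S c = S r" using cL r by simp
      then have "c = r" using syt_inj[OF S cL(1) rL] by simp
      then show ?thesis using r by simp
    qed
  qed
qed

lemma conn_agree:
  "m \<le> n \<Longrightarrow> T \<in> syt LL \<Longrightarrow> T' \<in> syt LL \<Longrightarrow> (\<forall>c. m < T c \<or> m < T' c \<longrightarrow> T c = T' c)
    \<Longrightarrow> (T, T') \<in> Pth m"
proof (induction m arbitrary: T T')
  case 0
  have "T = T'"
  proof
    fix c
    have h: "0 < T c \<or> 0 < T' c \<longrightarrow> T c = T' c" using 0(4) by blast
    then show "T c = T' c" by (cases "T c = 0"; cases "T' c = 0") auto
  qed
  then show ?case by simp
next
  case (Suc m)
  note T = Suc.prems(2) and T' = Suc.prems(3) and ag = Suc.prems(4)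
  obtain r where r: "r \<in> LL" "T r = Suc m" using syt_surj[OF T, of "Suc m"] Suc.prems(1) cL by auto
  obtain r' where r': "r' \<in> LL" "T' r' = Suc m" using syt_surj[OF T', of "Suc m"] Suc.prems(1) cL by auto
  show ?case
  proof (cases "r = r'")
    case True
    have "\<forall>c. m < T c \<or> m < T' c \<longrightarrow> T c = T' c"
    proof (intro allI impI)
      fix c assume h: "m < T c \<or> m < T' c"
      show "T c = T' c"
      proof (cases "Suc m < T c \<or> Suc m < T' c")
        case True then show ?thesis using ag by blast
      next
        case False
        show ?thesis
        proof (cases "m < T c")
          case True
          then have "T c = Suc m" using False by simp
          then have "c \<in> LL" using syt_val_in[OF T] by auto
          then have "c = r" using syt_inj[OF T _ r(1)] r \<open>T c = Suc m\<close> by simp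
          then show ?thesis using r(2) r'(2) \<open>r = r'\<close> \<open>T c = Suc m\<close> by simp
        next
          case False
          then have "T' c = Suc m" using h \<open>\<not> (Suc m < T c \<or> Suc m < T' c)\<close> by simp
          then have "c \<in> LL" using syt_val_in[OF T'] by auto
          then have "c = r'" using syt_inj[OF T' _ r'(1)] r' \<open>T' c = Suc m\<close> by simp
          then show ?thesis using r(2) r'(2) \<open>r = r'\<close> \<open>T' c = Suc m\<close> by simp
        qed
      qed
    qed
    moreover have mn: "m \<le> n" using Suc.prems(1) by simp
    ultimately have "(T, T') \<in> Pth m" by (intro Suc.IH[OF mn T T'])
    moreover have sb: "Pth m \<subseteq> Pth (Suc m)" by (rule Pth_mono) simp
    ultimately show ?thesis by (rule subsetD[rotated])
  next
    case False
    define Dk where "Dk = {c \<in> LL. T c \<le> Suc m}"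
    have Dk': "Dk = {c \<in> LL. T' c \<le> Suc m}"
    proof -
      have "T c \<le> Suc m \<longleftrightarrow> T' c \<le> Suc m" for c
      proof -
        have h: "Suc m < T c \<or> Suc m < T' c \<longrightarrow> T c = T' c" using ag by blast
        show ?thesis
        proof (cases "Suc m < T c \<or> Suc m < T' c")
          case True then show ?thesis using h by auto
        next
          case False then show ?thesis by simp
        qed
      qed
      then show ?thesis unfolding Dk_def by simp
    qed
    have rr: "removable Dk r" using prefix_max_removable[OF T r(1) r(2)] Dk_def by simp
    have rr': "removable Dk r'" using prefix_max_removable[OF T' r'(1) r'(2)] Dk' by simp
    have km: "Suc m \<le> card LL" using Suc.prems(1) cL by simp
    obtain S1 S2 where S: "S1 \<in> syt LL" "S2 \<in> syt LL" "S1 r = Suc m" "S1 r' = m" "S2 r' = Suc m" "S2 r = m"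
      "2 \<le> m" "\<forall>c. c \<notin> Dk \<longrightarrow> S1 c = T c \<and> S2 c = T c" "\<forall>c\<in>Dk. S1 c \<le> Suc m \<and> S2 c \<le> Suc m"
      "dual_d m S1 = S2"
      using bridge[OF T FL km Dk_def rr rr' False] by blast
    have a1: "\<forall>c. m < T c \<or> m < S1 c \<longrightarrow> T c = S1 c"
      by (rule agree_helper[OF T S(1) Dk_def r(2) S(3)]) (use S(8,9) in auto)
    have out2: "\<forall>c. c \<notin> Dk \<longrightarrow> S2 c = T' c"
    proof (intro allI impI)
      fix c assume c: "c \<notin> Dk"
      have "T c = T' c"
      proof (cases "c \<in> LL")
        case True
        then have "Suc m < T c" using c Dk_def by auto
        then show ?thesis using ag by blast
      next
        case False
        then show ?thesis using sytD(1)[OF T] sytD(1)[OF T'] by simp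
      qed
      then show "S2 c = T' c" using S(8)[rule_format, of c] c by simp
    qed
    have a2: "\<forall>c. m < T' c \<or> m < S2 c \<longrightarrow> T' c = S2 c"
      by (rule agree_helper[OF T' S(2) Dk' r'(2) S(5) out2]) (use S(9) in auto)
    have mn: "m \<le> n" using Suc.prems(1) by simp
    have a2': "\<forall>c. m < S2 c \<or> m < T' c \<longrightarrow> S2 c = T' c"
    proof (intro allI impI)
      fix c assume "m < S2 c \<or> m < T' c"
      then show "S2 c = T' c" using a2[rule_format, of c] by auto
    qed
    have p1: "(T, S1) \<in> Pth m" using Suc.IH[OF mn T S(1) a1] .
    have p2: "(S2, T') \<in> Pth m" using Suc.IH[OF mn S(2) T' a2'] .
    have "1 < m" "m < Suc m" "S2 = dual_d m S1" using S(7,10) by auto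
    then have "(S1, S2) \<in> Rm (Suc m)" unfolding Rm_def using S(1,2) by blast
    then have p3: "(S1, S2) \<in> Pth (Suc m)" by (intro r_into_rtrancl UnI1)
    have sb: "Pth m \<subseteq> Pth (Suc m)" by (rule Pth_mono) simp
    have t1: "(T, S1) \<in> Pth (Suc m)" using p1 sb by (rule subsetD[rotated])
    have t2: "(S2, T') \<in> Pth (Suc m)" using p2 sb by (rule subsetD[rotated])
    have "(T, S2) \<in> Pth (Suc m)" by (rule rtrancl_trans[OF t1 p3])
    then show ?thesis by (rule rtrancl_trans[OF _ t2])
  qed
qed

end


context main
begin

abbreviation "cellv v \<equiv> cell_of (\<phi> v) n"

lemma cellv_props:
  assumes v: "v \<in> V" and n1: "1 \<le> n"
  shows "cellv v \<in> LL \<and> \<phi> v (cellv v) = n \<and> removable LL (cellv v)"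
proof -
  have T: "\<phi> v \<in> syt LL" using phi_in[OF v] .
  have c: "cellv v \<in> LL \<and> \<phi> v (cellv v) = n" using cell_of_val[OF T n1] cL by simp
  then have "removable LL (cellv v)" using syt_max_removable[OF T FL] cL by simp
  then show ?thesis using c by simp
qed

lemma step1:
  assumes v: "v \<in> V" and w: "w \<in> V" and n1: "1 \<le> n" and e: "cellv v = cellv w"
  shows "\<sigma> v n = \<sigma> w n"
proof -
  have T: "\<phi> v \<in> syt LL" and T': "\<phi> w \<in> syt LL" using phi_in v w by auto
  have ag: "\<forall>c. n - 1 < \<phi> v c \<or> n - 1 < \<phi> w c \<longrightarrow> \<phi> v c = \<phi> w c"
  proof (intro allI impI)
    fix c assume h: "n - 1 < \<phi> v c \<or> n - 1 < \<phi> w c"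
    have cv: "cellv v \<in> LL \<and> \<phi> v (cellv v) = n" using cellv_props[OF v n1] by simp
    have cw: "cellv w \<in> LL \<and> \<phi> w (cellv w) = n" using cellv_props[OF w n1] by simp
    show "\<phi> v c = \<phi> w c"
    proof (cases "n - 1 < \<phi> v c")
      case True
      then have "\<phi> v c \<noteq> 0" by simp
      then have "c \<in> LL" using syt_val_in[OF T] by blast
      then have "\<phi> v c \<le> n" using syt_range[OF T] cL by simp
      then have "\<phi> v c = n" using True by linarith
      then have "c = cellv v" using cell_of_eq[OF T, of c n] n1 by simp
      then show ?thesis using cv cw e by simp
    next
      case False
      then have "n - 1 < \<phi> w c" using h by simp
      then have "\<phi> w c \<noteq> 0" by simp
      then have "c \<in> LL" using syt_val_in[OF T'] by blast
      then have "\<phi> w c \<le> n" using syt_range[OF T'] cL by simp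
      then have "\<phi> w c = n" using \<open>n - 1 < \<phi> w c\<close> by linarith
      then have "c = cellv w" using cell_of_eq[OF T', of c n] n1 by simp
      then show ?thesis using cv cw e by simp
    qed
  qed
  have "(\<phi> v, \<phi> w) \<in> Pth (n - 1)" by (rule conn_agree[OF _ T T' ag]) simp
  then have "\<sigma> (psi (\<phi> v)) n = \<sigma> (psi (\<phi> w)) n" by (rule path_sigma)
  then show ?thesis using psi2 v w by simp
qed

lemma step2:
  assumes v1: "v1 \<in> V" and v2: "v2 \<in> V" and n1: "1 \<le> n"
    and c: "content (cellv v1) < content (cellv v2)" and s1: "\<sigma> v1 n = -1"
  shows "\<sigma> v2 n = -1"
proof (rule ccontr)
  assume "\<sigma> v2 n \<noteq> -1"
  then have s2: "\<sigma> v2 n = 1" using pm[OF v2 n1 nN] by simp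
  define T where "T = \<phi> v2"
  define r1 where "r1 = cellv v1"
  define r2 where "r2 = cellv v2"
  have T: "T \<in> syt LL" using phi_in[OF v2] T_def by simp
  have p1: "r1 \<in> LL" "\<phi> v1 r1 = n" "removable LL r1" using cellv_props[OF v1 n1] r1_def by auto
  have p2: "r2 \<in> LL" "T r2 = n" "removable LL r2" using cellv_props[OF v2 n1] r2_def T_def by auto
  have ne: "r2 \<noteq> r1" using c r1_def r2_def by auto
  have Dk: "LL = {c \<in> LL. T c \<le> Suc (n - 1)}" using syt_range[OF T] cL n1 by auto
  have km: "Suc (n - 1) \<le> card LL" using cL n1 by simp
  obtain S1 S2 where S: "S1 \<in> syt LL" "S2 \<in> syt LL" "S1 r2 = Suc (n-1)" "S1 r1 = n - 1"
      "S2 r1 = Suc (n-1)" "S2 r2 = n - 1" "2 \<le> n - 1" "dual_d (n-1) S1 = S2"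
    using bridge[OF T FL km Dk p2(3) p1(3) ne] by blast
  have n3: "3 \<le> n" using S(7) by simp
  have S1n: "S1 r2 = n" and S2n: "S2 r1 = n" using S n1 by auto
  have w: "psi S1 \<in> V" "\<phi> (psi S1) = S1" using psi1[OF S(1)] by auto
  have x: "psi S2 \<in> V" "\<phi> (psi S2) = S2" using psi1[OF S(2)] by auto
  have "cellv (psi S1) = r2" using w(2) cell_of_eq[OF S(1) S1n] n1 by simp
  then have sw: "\<sigma> (psi S1) n = 1" using step1[OF w(1) v2 n1] r2_def s2 by simp
  have "cellv (psi S2) = r1" using x(2) cell_of_eq[OF S(2) S2n] n1 by simp
  then have sx: "\<sigma> (psi S2) n = -1" using step1[OF x(1) v1 n1] r1_def s1 by simp
  have "S1 \<noteq> S2" using S1n S(6) n1 by auto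
  then have "dual_d (n-1) S1 \<noteq> S1" using S(8) by simp
  then have ed: "{psi S1, psi S2} \<in> E (n - 1)" using edge_lift[OF S(1), of "n-1"] n3 S(8) by simp
  have sn: "Suc (n - 1) = n" using n1 by simp
  have "\<sigma> (psi S1) (Suc (n-1)) = - \<sigma> (psi S1) (n-1)"
    using ax3[of "n-1" "psi S1" "psi S2", OF _ _ ed] n3 nN sw sx sn by simp
  then have "\<sigma> (psi S1) (n-1) = -1" using sw sn by simp
  moreover have "\<sigma> (psi S1) (n-1) = desc_sig S1 (n-1)" using sig_lt[OF w(1), of "n-1"] w(2) n3 by simp
  moreover have "cell_of S1 (n-1) = r1" using cell_of_eq[OF S(1) S(4)] n3 by simp
  moreover have "cell_of S1 n = r2" using cell_of_eq[OF S(1) S1n] n1 by simp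
  moreover have "rd_less r1 r2" using c r1_def r2_def content_less_rd by simp
  ultimately show False unfolding desc_sig_def rlt_def using sn by simp
qed

lemma exists_a:
  assumes n1: "1 \<le> n"
  shows "\<exists>a. addable LL a \<and> (\<forall>v\<in>V. \<sigma> v n = (if rd_less (cellv v) a then 1 else -1))"
proof -
  define R where "R = cellv ` V"
  define P where "P = {r \<in> R. \<exists>v\<in>V. cellv v = r \<and> \<sigma> v n = 1}"
  have key: "\<sigma> v n = 1 \<longleftrightarrow> cellv v \<in> P" if v: "v \<in> V" for v
  proof
    assume "\<sigma> v n = 1" then show "cellv v \<in> P" using v P_def R_def by auto
  next
    assume "cellv v \<in> P"
    then obtain w where "w \<in> V" "cellv w = cellv v" "\<sigma> w n = 1" using P_def by auto
    then show "\<sigma> v n = 1" using step1[OF _ v n1] by metis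
  qed
  have Rrem: "r \<in> R \<Longrightarrow> removable LL r" for r using cellv_props n1 R_def by auto
  have PR: "P \<subseteq> R" using P_def by auto
  have finR: "finite R" using finV R_def by simp
  have suff: "\<exists>a. addable LL a \<and> (\<forall>r\<in>R. r \<in> P \<longleftrightarrow> rd_less r a)"
  proof (cases "P = R")
    case True
    have "\<forall>r\<in>R. rd_less r (right_cell LL)"
      using right_cell[OF FL] Rrem content_less_rd by (auto simp: removable_def)
    then show ?thesis using right_cell[OF FL] True by blast
  next
    case False
    show ?thesis
    proof (cases "P = {}")
      case True
      have "\<forall>r\<in>R. \<not> rd_less r (top_cell LL)"
      proof
        fix r assume "r \<in> R"
        then have "content (top_cell LL) < content r" using top_cell[OF FL] Rrem by (auto simp: removable_def)
        then show "\<not> rd_less r (top_cell LL)" using rd_less_content_le by fastforce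
      qed
      then show ?thesis using top_cell[OF FL] True by blast
    next
      case False
      have finP: "finite P" using finR PR finite_subset by blast
      have ne2: "R - P \<noteq> {}" using PR \<open>P \<noteq> R\<close> by blast
      have "Max (content ` P) \<in> content ` P" using finP False by simp
      then obtain rp where rp: "rp \<in> P" "content rp = Max (content ` P)" by force
      have rpmax: "content r \<le> content rp" if "r \<in> P" for r using rp finP that by simp
      have "Min (content ` (R - P)) \<in> content ` (R - P)" using finR ne2 by simp
      then obtain rm where rm: "rm \<in> R - P" "content rm = Min (content ` (R - P))" by force
      have rmmin: "content rm \<le> content r" if "r \<in> R - P" for r using rm finR that by simp
      have lt: "content rp < content rm"
      proof (rule ccontr)
        assume "\<not> content rp < content rm"
        moreover have "content rp \<noteq> content rm"
          using removable_content_inj[OF FL Rrem Rrem, of rp rm] rp(1) rm(1) PR by auto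
        ultimately have c: "content rm < content rp" by simp
        obtain v1 where v1: "v1 \<in> V" "cellv v1 = rm" using rm(1) R_def by auto
        obtain v2 where v2: "v2 \<in> V" "cellv v2 = rp" "\<sigma> v2 n = 1" using rp(1) P_def by auto
        have "\<sigma> v1 n \<noteq> 1" using key[OF v1(1)] v1(2) rm(1) by simp
        then have "\<sigma> v1 n = -1" using pm[OF v1(1) n1 nN] by simp
        then have "\<sigma> v2 n = -1" using step2[OF v1(1) v2(1) n1] c v1 v2 by simp
        then show False using v2 by simp
      qed
      obtain a where a: "addable LL a" "content rp < content a" "content a < content rm"
        using addable_between_removables[OF FL Rrem Rrem lt] rp(1) rm(1) PR by blast
      have "\<forall>r\<in>R. r \<in> P \<longleftrightarrow> rd_less r a"
      proof
        fix r assume r: "r \<in> R"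
        show "r \<in> P \<longleftrightarrow> rd_less r a"
        proof (cases "r \<in> P")
          case True
          then have "content r < content a" using rpmax[OF True] a(2) by linarith
          then show ?thesis using True content_less_rd by simp
        next
          case False
          then have "r \<in> R - P" using r by simp
          then have "content a < content r" using rmmin a(3) by fastforce
          then show ?thesis using False rd_less_content_le by fastforce
        qed
      qed
      then show ?thesis using a by blast
    qed
  qed
  then obtain a where a: "addable LL a" "\<forall>r\<in>R. r \<in> P \<longleftrightarrow> rd_less r a" by blast
  have "\<forall>v\<in>V. \<sigma> v n = (if rd_less (cellv v) a then 1 else -1)"
  proof
    fix v assume v: "v \<in> V"
    have "cellv v \<in> R" using v R_def by simp
    then have "rd_less (cellv v) a \<longleftrightarrow> \<sigma> v n = 1" using a(2) key[OF v] by simp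
    then show "\<sigma> v n = (if rd_less (cellv v) a then 1 else -1)" using pm[OF v n1 nN] by auto
  qed
  then show ?thesis using a(1) by blast
qed

end


lemma restrict_syt:
  assumes T: "T \<in> syt D" and sub: "L \<subseteq> D" and fin: "finite D" and cL: "card L = n"
    and img: "T ` (D - L) = {Suc n..card D}"
  shows "(\<lambda>c. if c \<in> L then T c else 0) \<in> syt L"
proof -
  let ?P = "\<lambda>c. if c \<in> L then T c else 0"
  have inj: "inj_on T D" using sytD(2)[OF T] by (simp add: bij_betw_def)
  have injL: "inj_on ?P L" using inj_on_subset[OF inj sub] by (simp add: inj_on_def)
  have sub1: "T ` L \<subseteq> {1..n}"
  proof
    fix v assume "v \<in> T ` L"
    then obtain c where c: "c \<in> L" "v = T c" by auto
    have cD: "c \<in> D" using c sub by auto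
    have "T c \<notin> {Suc n..card D}"
    proof
      assume "T c \<in> {Suc n..card D}"
      then obtain c' where "c' \<in> D - L" "T c' = T c" using img by (metis imageE)
      then have "c' = c" using inj cD by (auto simp: inj_on_def)
      then show False using \<open>c' \<in> D - L\<close> c by simp
    qed
    then show "v \<in> {1..n}" using syt_range[OF T cD] c by auto
  qed
  have finL: "finite L" using finite_subset[OF sub fin] .
  have "card (T ` L) = n" using card_image[OF inj_on_subset[OF inj sub]] cL by simp
  then have "T ` L = {1..n}" using card_subset_eq[OF _ sub1] by simp
  then have "?P ` L = {1..n}" by (auto simp: image_def)
  then have bij: "bij_betw ?P L {1..card L}" using injL cL by (simp add: bij_betw_def)
  have r1: "?P (i,j) < ?P (Suc i, j)" if "(i,j) \<in> L" "(Suc i, j) \<in> L" for i j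
    using sytD(3)[OF T] that sub by auto
  have r2: "?P (i,j) < ?P (i, Suc j)" if "(i,j) \<in> L" "(i, Suc j) \<in> L" for i j
    using sytD(4)[OF T] that sub by auto
  show ?thesis unfolding syt_def using bij r1 r2 by auto
qed

context main
begin

lemma LL_empty: "n = 0 \<Longrightarrow> LL = {}"
  using cL ferrers_finite[OF FL] by simp

definition a0 :: "nat \<times> nat" where
  "a0 = (SOME a. addable LL a \<and> (1 \<le> n \<longrightarrow> (\<forall>v\<in>V. \<sigma> v n = (if rd_less (cellv v) a then 1 else -1))))"

lemma a0: "addable LL a0 \<and> (1 \<le> n \<longrightarrow> (\<forall>v\<in>V. \<sigma> v n = (if rd_less (cellv v) a0 then 1 else -1)))"
proof -
  have "\<exists>a. addable LL a \<and> (1 \<le> n \<longrightarrow> (\<forall>v\<in>V. \<sigma> v n = (if rd_less (cellv v) a then 1 else -1)))"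
  proof (cases "1 \<le> n")
    case True then show ?thesis using exists_a by blast
  next
    case False
    then have "LL = {}" using LL_empty by simp
    then have "addable LL (1,1)" by (simp add: addable_def)
    then show ?thesis using False by blast
  qed
  then show ?thesis unfolding a0_def by (rule someI_ex)
qed

definition s0 :: "nat \<Rightarrow> int" where "s0 k = \<sigma> (SOME v. v \<in> V) k"

lemma Vne: "V \<noteq> {}"
  using bij syt_nonempty[OF FL] by (auto simp: bij_betw_def)

lemma sconst:
  assumes v: "v \<in> V" and k: "Suc n \<le> k" "k < N"
  shows "\<sigma> v k = s0 k"
proof -
  define v0 where "v0 = (SOME v. v \<in> V)"
  have v0: "v0 \<in> V" using Vne v0_def by (simp add: some_in_eq)
  have "(v0, v) \<in> (edge_rel (all_edges n E))\<^sup>*" using conn v0 v by (simp add: connected_graph_def)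
  then have "\<sigma> v0 k = \<sigma> v k"
  proof (induction rule: rtrancl_induct)
    case base then show ?case by simp
  next
    case (step y z)
    then obtain j where j: "1 < j" "j < n" "{y,z} \<in> E j"
      unfolding edge_rel_def all_edges_def by auto
    then have "\<sigma> y k = \<sigma> z k" using ax2[OF j(1,2,3), of k] k by simp
    then show ?case using step.IH by simp
  qed
  then show ?thesis using v0_def s0_def by simp
qed

lemma cons: "constr LL a0 n"
  using FL a0 cL by (simp add: constr_def)

end


context main
begin

abbreviation "MM \<equiv> N - Suc n"
abbreviation "DM \<equiv> Ds LL a0 s0 n MM"
abbreviation "AM \<equiv> Af LL a0 s0 n MM"
abbreviation "aug \<equiv> augment lam AM"
abbreviation "PPs \<equiv> pos LL a0 s0 n"

lemma cardDM: "card DM = N" using constr.card_Ds[OF cons] nN by simp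
lemma FDM: "ferrers DM" using constr.ferrers_Ds[OF cons] .
lemma LsubDM: "LL \<subseteq> DM" using constr.L_sub_Ds[OF cons] .

lemma aug_syt: "P \<in> syt LL \<Longrightarrow> aug P \<in> syt DM"
  using constr.augment_syt[OF cons] by simp

lemma A_bij: "bij_betw AM (DM - LL) {Suc n..N}"
  using constr.Af_bij[OF cons, of s0 MM] nN by simp

lemma A_zero: "c \<notin> DM - LL \<Longrightarrow> AM c = 0"
  using constr.Af_zero[OF cons] by simp

lemma A_vals: "c \<notin> LL \<Longrightarrow> AM c = 0 \<or> Suc n \<le> AM c"
proof -
  assume c: "c \<notin> LL"
  show ?thesis
  proof (cases "c \<in> DM")
    case True
    then have "AM c \<in> {Suc n..N}" using A_bij c by (auto simp: bij_betw_def)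
    then show ?thesis by simp
  next
    case False then show ?thesis using A_zero by simp
  qed
qed

lemma cell_aug_low:
  assumes P: "P \<in> syt LL" and j: "1 \<le> j" "j \<le> n"
  shows "cell_of (aug P) j = cell_of P j"
proof -
  have c: "cell_of P j \<in> LL \<and> P (cell_of P j) = j" using cell_of_val[OF P j(1)] j cL by simp
  then have "aug P (cell_of P j) = j" by (simp add: augment_def)
  then show ?thesis using cell_of_eq[OF aug_syt[OF P] _ j(1)] by simp
qed

lemma cell_aug_high:
  assumes P: "P \<in> syt LL" and j: "j \<le> MM"
  shows "cell_of (aug P) (Suc n + j) = PPs j"
proof -
  have "PPs j \<notin> LL" using constr.pos_notin_L[OF cons] .
  then have "aug P (PPs j) = Suc n + j" using constr.Af_pos[OF cons j] by (simp add: augment_def)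
  then show ?thesis using cell_of_eq[OF aug_syt[OF P], of "PPs j" "Suc n + j"] by simp
qed

lemma swap_aug:
  assumes x: "1 \<le> x" "x \<le> n" and y: "1 \<le> y" "y \<le> n"
  shows "swap_entries (aug P) x y = aug (swap_entries P x y)"
proof
  fix c
  show "swap_entries (aug P) x y c = aug (swap_entries P x y) c"
  proof (cases "c \<in> LL")
    case True then show ?thesis by (simp add: swap_entries_def augment_def)
  next
    case False
    then have "AM c \<noteq> x" "AM c \<noteq> y" using A_vals[OF False] x y by auto
    then show ?thesis using False by (simp add: swap_entries_def augment_def)
  qed
qed

lemma dual_aug:
  assumes P: "P \<in> syt LL" and i: "1 < i" "i < n"
  shows "dual_d i (aug P) = aug (dual_d i P)"
proof -
  have c1: "cell_of (aug P) (i - 1) = cell_of P (i - 1)" using cell_aug_low[OF P] i by simp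
  have c2: "cell_of (aug P) i = cell_of P i" using cell_aug_low[OF P] i by simp
  have c3: "cell_of (aug P) (Suc i) = cell_of P (Suc i)" using cell_aug_low[OF P] i by simp
  have s1: "swap_entries (aug P) i (Suc i) = aug (swap_entries P i (Suc i))" using swap_aug i by simp
  have s2: "swap_entries (aug P) i (i - 1) = aug (swap_entries P i (i - 1))" using swap_aug i by simp
  show ?thesis unfolding dual_d_def rlt_def c1 c2 c3 s1 s2 by (simp only: if_distrib[where f = "augment lam AM"])
qed

lemma dual_cases: "dual_d i P \<in> {P, swap_entries P i (Suc i), swap_entries P i (i - 1)}"
  unfolding dual_d_def by simp

lemma dual_zero: "P \<in> syt LL \<Longrightarrow> 1 < i \<Longrightarrow> c \<notin> LL \<Longrightarrow> dual_d i P c = 0"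
proof -
  assume a: "P \<in> syt LL" "1 < i" "c \<notin> LL"
  then have z: "P c = 0" using sytD(1) by blast
  then have "swap_entries P i (Suc i) c = 0" "swap_entries P i (i - 1) c = 0"
    using a(2) by (simp_all add: swap_entries_def)
  then show ?thesis using dual_cases[of i P] z by auto
qed

lemma aug_inj: "(\<forall>c. c \<notin> LL \<longrightarrow> P c = 0) \<Longrightarrow> (\<forall>c. c \<notin> LL \<longrightarrow> Q c = 0) \<Longrightarrow> aug P = aug Q \<Longrightarrow> P = Q"
proof
  fix c assume h: "\<forall>c. c \<notin> LL \<longrightarrow> P c = 0" "\<forall>c. c \<notin> LL \<longrightarrow> Q c = 0" "aug P = aug Q"
  show "P c = Q c"
  proof (cases "c \<in> LL")
    case True
    then show ?thesis using fun_cong[OF h(3), of c] by (simp add: augment_def)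
  next
    case False then show ?thesis using h(1)[rule_format, of c] h(2)[rule_format, of c] by simp
  qed
qed

lemma aug_inj_on: "inj_on aug (syt LL)"
proof (rule inj_onI)
  fix P Q assume h: "P \<in> syt LL" "Q \<in> syt LL" "aug P = aug Q"
  have "\<forall>c. c \<notin> LL \<longrightarrow> P c = 0" "\<forall>c. c \<notin> LL \<longrightarrow> Q c = 0" using sytD(1) h(1,2) by blast+
  then show "P = Q" using aug_inj h(3) by blast
qed

end


context main
begin

lemma ASYT_eq:
  assumes rho: "cells rho = DM"
  shows "ASYT lam rho AM = aug ` syt LL"
proof
  show "aug ` syt LL \<subseteq> ASYT lam rho AM"
  proof
    fix T assume "T \<in> aug ` syt LL"
    then obtain P where P: "P \<in> syt LL" "T = aug P" by auto
    have "T \<in> SYT rho" using aug_syt[OF P(1)] P(2) rho SYT_syt[of rho] by simp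
    moreover have "\<forall>c \<in> cells rho - cells lam. T c = AM c" using P(2) by (simp add: augment_def)
    ultimately show "T \<in> ASYT lam rho AM" by (simp add: ASYT_def)
  qed
next
  show "ASYT lam rho AM \<subseteq> aug ` syt LL"
  proof
    fix T assume "T \<in> ASYT lam rho AM"
    then have T: "T \<in> syt DM" and TA: "\<forall>c \<in> DM - LL. T c = AM c"
      using rho SYT_syt[of rho] by (auto simp: ASYT_def)
    define P where "P = (\<lambda>c. if c \<in> LL then T c else 0)"
    have "T ` (DM - LL) = AM ` (DM - LL)" using TA by (auto simp: image_def)
    also have "\<dots> = {Suc n..card DM}" using A_bij cardDM by (simp add: bij_betw_def)
    finally have img: "T ` (DM - LL) = {Suc n..card DM}" .
    have P: "P \<in> syt LL" unfolding P_def
      by (rule restrict_syt[OF T LsubDM ferrers_finite[OF FDM] cL img])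
    have "aug P = T"
    proof
      fix c show "aug P c = T c"
      proof (cases "c \<in> LL")
        case True then show ?thesis by (simp add: augment_def P_def)
      next
        case False
        show ?thesis
        proof (cases "c \<in> DM")
          case True then show ?thesis using False TA by (simp add: augment_def)
        next
          case False
          then show ?thesis using A_zero sytD(1)[OF T] \<open>c \<notin> LL\<close> by (simp add: augment_def)
        qed
      qed
    qed
    then show "T \<in> aug ` syt LL" using P by blast
  qed
qed

lemma desc_aug:
  assumes v: "v \<in> V" and k: "1 \<le> k" "k < N"
  shows "desc_sig (aug (\<phi> v)) k = \<sigma> v k"
proof -
  have P: "\<phi> v \<in> syt LL" using phi_in[OF v] .
  consider "k < n" | "k = n" | "n < k" by linarith
  then show ?thesis
  proof cases
    case 1
    have "cell_of (aug (\<phi> v)) k = cell_of (\<phi> v) k" "cell_of (aug (\<phi> v)) (Suc k) = cell_of (\<phi> v) (Suc k)"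
      using cell_aug_low[OF P] k 1 by auto
    then have "desc_sig (aug (\<phi> v)) k = desc_sig (\<phi> v) k" by (simp add: desc_sig_def rlt_def)
    then show ?thesis using sig_lt[OF v k(1) 1] by simp
  next
    case 2
    have "cell_of (aug (\<phi> v)) n = cellv v" using cell_aug_low[OF P] k 2 by auto
    moreover have "cell_of (aug (\<phi> v)) (Suc n + 0) = PPs 0" using cell_aug_high[OF P, of 0] by simp
    ultimately have "desc_sig (aug (\<phi> v)) n = (if rd_less (cellv v) a0 then 1 else -1)"
      by (simp add: desc_sig_def rlt_def)
    then show ?thesis using a0 v 2 k by simp
  next
    case 3
    define j where "j = k - Suc n"
    have kj: "k = Suc n + j" "Suc k = Suc n + Suc j" using 3 j_def by auto
    have jM: "Suc j \<le> MM" using k kj by simp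
    have c1: "cell_of (aug (\<phi> v)) k = PPs j" using cell_aug_high[OF P, of j] jM kj by simp
    have c2: "cell_of (aug (\<phi> v)) (Suc k) = PPs (Suc j)" using cell_aug_high[OF P, of "Suc j"] jM kj by simp
    have sv: "\<sigma> v k = s0 k" using sconst[OF v _ k(2)] 3 by simp
    show ?thesis
    proof (cases "s0 k = 1")
      case True
      then have "content (PPs j) < content (PPs (Suc j))" using constr.pos_content(1)[OF cons, of s0 j] kj by simp
      then have "rd_less (PPs j) (PPs (Suc j))" using content_less_rd by simp
      then show ?thesis using c1 c2 sv True by (simp add: desc_sig_def rlt_def)
    next
      case False
      then have "content (PPs (Suc j)) < content (PPs j)" using constr.pos_content(2)[OF cons, of s0 j] kj by simp
      then have "\<not> rd_less (PPs j) (PPs (Suc j))" using rd_less_content_le by fastforce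
      moreover have "\<sigma> v k = -1" using pm[OF v k] sv False by auto
      ultimately show ?thesis using c1 c2 by (simp add: desc_sig_def rlt_def)
    qed
  qed
qed

lemma edges_aug:
  assumes rho: "cells rho = DM" and i: "1 < i" "i < n"
  shows "image (image (\<lambda>v. aug (\<phi> v))) (E i) = tab_edges n (ASYT lam rho AM) i"
proof -
  have "image (image (\<lambda>v. aug (\<phi> v))) (E i) = image (image aug) (image (image \<phi>) (E i))"
    by (auto simp: image_image)
  also have "\<dots> = image (image aug) (tab_edges n (syt LL) i)" using edges_eq[OF i] by simp
  also have "\<dots> = tab_edges n (ASYT lam rho AM) i"
  proof
    show "image (image aug) (tab_edges n (syt LL) i) \<subseteq> tab_edges n (ASYT lam rho AM) i"
    proof
      fix x assume "x \<in> image (image aug) (tab_edges n (syt LL) i)"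
      then obtain P where P: "P \<in> syt LL" "dual_d i P \<noteq> P" "x = aug ` {P, dual_d i P}"
        unfolding tab_edges_def using i by auto
      have x: "x = {aug P, dual_d i (aug P)}" using P(3) dual_aug[OF P(1) i] by simp
      have "aug (dual_d i P) \<noteq> aug P"
      proof
        assume "aug (dual_d i P) = aug P"
        moreover have "\<forall>c. c \<notin> LL \<longrightarrow> dual_d i P c = 0" using dual_zero[OF P(1) i(1)] by blast
        moreover have "\<forall>c. c \<notin> LL \<longrightarrow> P c = 0" using sytD(1)[OF P(1)] by blast
        ultimately show False using aug_inj P(2) by blast
      qed
      then have "dual_d i (aug P) \<noteq> aug P" using dual_aug[OF P(1) i] by simp
      moreover have "aug P \<in> ASYT lam rho AM" using ASYT_eq[OF rho] P(1) by blast
      ultimately show "x \<in> tab_edges n (ASYT lam rho AM) i" unfolding tab_edges_def using i x by auto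
    qed
  next
    show "tab_edges n (ASYT lam rho AM) i \<subseteq> image (image aug) (tab_edges n (syt LL) i)"
    proof
      fix x assume "x \<in> tab_edges n (ASYT lam rho AM) i"
      then obtain T where T: "T \<in> ASYT lam rho AM" "dual_d i T \<noteq> T" "x = {T, dual_d i T}"
        unfolding tab_edges_def using i by auto
      obtain P where P: "P \<in> syt LL" "T = aug P" using T(1) ASYT_eq[OF rho] by auto
      have dd: "dual_d i T = aug (dual_d i P)" using dual_aug[OF P(1) i] P(2) by simp
      then have "dual_d i P \<noteq> P" using T(2) P(2) by auto
      then have "{P, dual_d i P} \<in> tab_edges n (syt LL) i" unfolding tab_edges_def using i P(1) by auto
      moreover have "x = aug ` {P, dual_d i P}" using T(3) P(2) dd by simp
      ultimately show "x \<in> image (image aug) (tab_edges n (syt LL) i)" by blast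
    qed
  qed
  finally show ?thesis .
qed

lemma iso_aug:
  assumes rho: "cells rho = DM"
  shows "graph_iso n N V \<sigma> E (ASYT lam rho AM) desc_sig (tab_edges n (ASYT lam rho AM)) (\<lambda>v. aug (\<phi> v))"
proof -
  have b: "bij_betw aug (syt LL) (aug ` syt LL)" using inj_on_imp_bij_betw[OF aug_inj_on] .
  have "bij_betw (aug \<circ> \<phi>) V (aug ` syt LL)" using bij_betw_trans[OF bij b] .
  then have bb: "bij_betw (\<lambda>v. aug (\<phi> v)) V (ASYT lam rho AM)" using ASYT_eq[OF rho] by (simp add: comp_def)
  show ?thesis unfolding graph_iso_def using bb desc_aug edges_aug[OF rho] by blast
qed

end


context main
begin

lemma uniq:
  assumes rho: "is_partition rho'" and filling: "is_filling lam rho' n N A'"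
    and ne: "ASYT lam rho' A' \<noteq> {}"
    and gi: "graph_iso n N V \<sigma> E (ASYT lam rho' A') desc_sig (tab_edges n (ASYT lam rho' A'))
                 (\<lambda>v. augment lam A' (\<phi> v))"
  shows "A' a0 = Suc n"
proof -
  define D' where "D' = cells rho'"
  have F': "ferrers D'" using partition_ferrers[OF rho] D'_def by simp
  have SYTD: "SYT rho' = syt D'" using SYT_syt D'_def by simp
  have bijA: "bij_betw A' (D' - LL) {Suc n..N}" and zA: "\<forall>c. c \<notin> D' - LL \<longrightarrow> A' c = 0"
    using filling D'_def by (auto simp: is_filling_def)
  have "Suc n \<in> A' ` (D' - LL)" using bijA nN by (auto simp: bij_betw_def)
  then obtain c' where c': "c' \<in> D' - LL" "A' c' = Suc n" by auto
  have Avals: "Suc n \<le> A' c" if "c \<in> D' - LL" for c using bijA that by (auto simp: bij_betw_def)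
  obtain T0 where T0: "T0 \<in> ASYT lam rho' A'" using ne by blast
  have T0s: "T0 \<in> syt D'" and T0A: "\<forall>c\<in>D' - LL. T0 c = A' c"
    using T0 SYTD D'_def by (auto simp: ASYT_def)
  have T0c: "T0 c' = Suc n" using T0A c' by simp
  obtain x y where xy: "c' = (x,y)" by fastforce
  have pxy: "1 \<le> x" "1 \<le> y" using ferrers_pos[OF F'] c' xy by auto
  have left: "(x - 1, y) \<in> LL" if x2: "2 \<le> x"
  proof (rule ccontr)
    assume nl: "(x - 1, y) \<notin> LL"
    have inD: "(x - 1, y) \<in> D'" using ferrersD[OF F', of x y "x-1" y] c' xy pxy x2 by simp
    have "T0 (x - 1, y) < T0 (Suc (x - 1), y)" using sytD(3)[OF T0s inD] c' xy x2 by simp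
    then have "T0 (x - 1, y) < Suc n" using T0c xy x2 by simp
    moreover have "T0 (x - 1, y) = A' (x - 1, y)" using T0A inD nl by simp
    moreover have "Suc n \<le> A' (x - 1, y)" using Avals inD nl by simp
    ultimately show False by simp
  qed
  have below: "(x, y - 1) \<in> LL" if y2: "2 \<le> y"
  proof (rule ccontr)
    assume nl: "(x, y - 1) \<notin> LL"
    have inD: "(x, y - 1) \<in> D'" using ferrersD[OF F', of x y x "y-1"] c' xy pxy y2 by simp
    have "T0 (x, y - 1) < T0 (x, Suc (y - 1))" using sytD(4)[OF T0s inD] c' xy y2 by simp
    then have "T0 (x, y - 1) < Suc n" using T0c xy y2 by simp
    moreover have "T0 (x, y - 1) = A' (x, y - 1)" using T0A inD nl by simp
    moreover have "Suc n \<le> A' (x, y - 1)" using Avals inD nl by simp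
    ultimately show False by simp
  qed
  have adc: "addable LL c'" unfolding addable_def using c' xy pxy left below by simp
  have ada: "addable LL a0" using a0 by simp
  have "c' = a0"
  proof (cases "n = 0")
    case True
    then have "LL = {}" using LL_empty by simp
    then show ?thesis using addable_empty adc ada by metis
  next
    case False
    then have n1: "1 \<le> n" by simp
    have bijF: "bij_betw (\<lambda>v. augment lam A' (\<phi> v)) V (ASYT lam rho' A')" using gi by (simp add: graph_iso_def)
    have eqv: "rd_less (cellv v) c' \<longleftrightarrow> rd_less (cellv v) a0" if v: "v \<in> V" for v
    proof -
      let ?T = "augment lam A' (\<phi> v)"
      have "?T \<in> ASYT lam rho' A'" using bijF v by (auto simp: bij_betw_def)
      then have Ts: "?T \<in> syt D'" using SYTD D'_def by (auto simp: ASYT_def)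
      have cp: "cellv v \<in> LL \<and> \<phi> v (cellv v) = n" using cellv_props[OF v n1] by simp
      have "?T (cellv v) = n" using cp by (simp add: augment_def)
      then have cn: "cell_of ?T n = cellv v" using cell_of_eq[OF Ts, of "cellv v" n] n1 by simp
      have "?T c' = Suc n" using c' by (simp add: augment_def)
      then have cs: "cell_of ?T (Suc n) = c'" using cell_of_eq[OF Ts, of c' "Suc n"] by simp
      have "desc_sig ?T n = \<sigma> v n" using gi v n1 nN by (simp add: graph_iso_def)
      then have "\<sigma> v n = (if rd_less (cellv v) c' then 1 else -1)"
        using cn cs by (simp add: desc_sig_def rlt_def)
      moreover have "\<sigma> v n = (if rd_less (cellv v) a0 then 1 else -1)" using a0 v n1 by simp
      ultimately show ?thesis by (auto split: if_splits)
    qed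
    show ?thesis
    proof (rule ccontr)
      assume neq: "c' \<noteq> a0"
      have ex: "\<exists>r. removable LL r \<and> ((content a0 < content r \<and> content r < content c') \<or>
                                       (content c' < content r \<and> content r < content a0))"
      proof (cases "content a0 \<le> content c'")
        case True
        obtain x1 y1 where a0xy: "a0 = (x1,y1)" by fastforce
        show ?thesis using removable_between_addables[OF FL, of x1 y1 x y] ada adc a0xy xy neq True by auto
      next
        case False
        obtain x1 y1 where a0xy: "a0 = (x1,y1)" by fastforce
        show ?thesis using removable_between_addables[OF FL, of x y x1 y1] ada adc a0xy xy neq False by auto
      qed
      then obtain r where r: "removable LL r"
        and btw: "(content a0 < content r \<and> content r < content c') \<or> (content c' < content r \<and> content r < content a0)"
        by blast
      have rL: "r \<in> LL" using r by (simp add: removable_def)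
      have Fr: "ferrers (LL - {r})" using ferrers_remove[OF FL r] .
      obtain Q where Q: "Q \<in> syt (LL - {r})" using syt_nonempty[OF Fr] by blast
      have "Q(r := Suc (card (LL - {r}))) \<in> syt (insert r (LL - {r}))"
        using syt_extend[OF Q Fr removable_addable[OF FL r]] .
      moreover have "insert r (LL - {r}) = LL" using rL by auto
      moreover have "Suc (card (LL - {r})) = n" using rL cL n1 ferrers_finite[OF FL] by simp
      ultimately have P: "Q(r := n) \<in> syt LL" by simp
      define v where "v = psi (Q(r := n))"
      have v: "v \<in> V" "\<phi> v = Q(r := n)" using psi1[OF P] v_def by auto
      have "cellv v = r" using v(2) cell_of_eq[OF P, of r n] n1 by simp
      then have e: "rd_less r c' \<longleftrightarrow> rd_less r a0" using eqv[OF v(1)] by simp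
      show False
      proof (cases "content a0 < content r \<and> content r < content c'")
        case True
        then have "rd_less r c'" "\<not> rd_less r a0" using content_less_rd rd_less_content_le by fastforce+
        then show False using e by simp
      next
        case False
        then have "content c' < content r" "content r < content a0" using btw by auto
        then have "rd_less r a0" "\<not> rd_less r c'" using content_less_rd rd_less_content_le by fastforce+
        then show False using e by simp
      qed
    qed
  qed
  then show ?thesis using c' by simp
qed

end

theorem lemma3p8:
  fixes V :: "'v set" and \<sigma> :: "'v \<Rightarrow> nat \<Rightarrow> int" and E :: "nat \<Rightarrow> 'v set set"
    and n N :: nat and lam :: "nat list" and \<phi> :: "'v \<Rightarrow> tableau"
  assumes deg: "dual_equivalence_graph n N V \<sigma> E"
    and conn: "connected_graph n V E"
    and nN: "n < N"
    and lam: "is_partition lam" "sum_list lam = n"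
    and iso: "graph_iso n n V (restr_sig n \<sigma>) (restr_edges n E)
                (SYT lam) desc_sig (tab_edges n (SYT lam)) \<phi>"
  shows "(\<exists>rho A. is_partition rho \<and> sum_list rho = N \<and> cells lam \<subseteq> cells rho
            \<and> is_filling lam rho n N A \<and> ASYT lam rho A \<noteq> {}
            \<and> graph_iso n N V \<sigma> E (ASYT lam rho A) desc_sig (tab_edges n (ASYT lam rho A))
                 (\<lambda>v. augment lam A (\<phi> v)))
       \<and> (\<exists>c. \<forall>rho A. is_partition rho \<and> sum_list rho = N \<and> cells lam \<subseteq> cells rho
            \<and> is_filling lam rho n N A \<and> ASYT lam rho A \<noteq> {}
            \<and> graph_iso n N V \<sigma> E (ASYT lam rho A) desc_sig (tab_edges n (ASYT lam rho A))
                 (\<lambda>v. augment lam A (\<phi> v))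
            \<longrightarrow> A c = Suc n)"
proof -
  interpret M: main V \<sigma> E n N lam \<phi>
    by (rule main.intro[OF deg conn nN lam(1) lam(2) iso])
  obtain rho where rho: "is_partition rho" "cells rho = M.DM"
    using ferrers_partition[OF M.FDM] by blast
  have s: "sum_list rho = N" using cells_finite_card[of rho] rho M.cardDM by simp
  have sub: "cells lam \<subseteq> cells rho" using M.LsubDM rho by simp
  have fill: "is_filling lam rho n N M.AM" unfolding is_filling_def
    using M.A_zero M.A_bij rho(2) by simp
  have ne: "ASYT lam rho M.AM \<noteq> {}" using M.ASYT_eq[OF rho(2)] syt_nonempty[OF M.FL] by simp
  have gi: "graph_iso n N V \<sigma> E (ASYT lam rho M.AM) desc_sig (tab_edges n (ASYT lam rho M.AM))
                 (\<lambda>v. augment lam M.AM (\<phi> v))" using M.iso_aug[OF rho(2)] .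
  have part1: "\<exists>rho A. is_partition rho \<and> sum_list rho = N \<and> cells lam \<subseteq> cells rho
            \<and> is_filling lam rho n N A \<and> ASYT lam rho A \<noteq> {}
            \<and> graph_iso n N V \<sigma> E (ASYT lam rho A) desc_sig (tab_edges n (ASYT lam rho A))
                 (\<lambda>v. augment lam A (\<phi> v))"
    using rho(1) s sub fill ne gi by blast
  have part2: "\<forall>rho A. is_partition rho \<and> sum_list rho = N \<and> cells lam \<subseteq> cells rho
            \<and> is_filling lam rho n N A \<and> ASYT lam rho A \<noteq> {}
            \<and> graph_iso n N V \<sigma> E (ASYT lam rho A) desc_sig (tab_edges n (ASYT lam rho A))
                 (\<lambda>v. augment lam A (\<phi> v))
            \<longrightarrow> A M.a0 = Suc n"
    using M.uniq by blast
  show ?thesis using part1 part2 by blast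
qed


end
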